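(* Let $\psi_{AB}$ be an $m$-dimensional noisy maximally entangled state with maximal correlation $\rho=\rho(\psi_{AB})$. For any standard orthonormal bases $\mathcal{A}=\{\mathcal{A}_i\}_{i=0}^{m^2-1}$ and $\mathcal{B}=\{\mathcal{B}_i\}_{i=0}^{m^2-1}$ of $\mathcal{M}_m$, the correlation matrix $\mathsf{Corr}(\psi_{AB},\mathcal{A},\mathcal{B})$ has largest singular value $1$ and second largest singular value $\rho$. Moreover, there exist standard orthonormal bases $\mathcal{A},\mathcal{B}$ of $\mathcal{M}_m$ such that $\mathsf{Corr}(\psi_{AB},\mathcal{A},\mathcal{B})_{i,j}=c_i$ if $i=j$ and $0$ otherwise, where $c_0=1$, $c_1=\rho$ and $c_0\ge c_1\ge c_2\ge\cdots\ge c_{m^2-1}$.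
   Context: A standard orthonormal basis of $\mathcal{M}_m$ (complex $m\times m$ matrices with inner product $\frac1m\mathrm{Tr}X^\dagger Y$) is an orthonormal basis of Hermitian matrices $\{\mathcal{B}_0,\ldots,\mathcal{B}_{m^2-1}\}$ with $\mathcal{B}_0=\mathrm{id}_m$. The correlation matrix $\mathsf{Corr}(\psi_{AB},\mathcal{A},\mathcal{B})$ is the $m^2\times m^2$ matrix indexed by $i,j\in\{0,\ldots,m^2-1\}$ with entries $\mathrm{Tr}((\mathcal{A}_i\otimes\mathcal{B}_j)\psi_{AB})$. A noisy maximally entangled state is a state $\psi_{AB}$ on $\mathbb{C}^m\otimes\mathbb{C}^m$ with $\psi_A=\psi_B=\mathrm{id}_m/m$ and maximal correlation $\rho(\psi_{AB})=\sup\{|\mathrm{Tr}((P^\dagger\otimes Q)\psi_{AB})|:\mathrm{Tr}P=\mathrm{Tr}Q=0,\ \tfrac1m\mathrm{Tr}P^\dagger P=\tfrac1m\mathrm{Tr}Q^\dagger Q=1\}<1$. *)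

theory Defs
  imports "Jordan_Normal_Form.Schur_Decomposition" "Jordan_Normal_Form.Char_Poly"
begin

text \<open>Complex matrices are Jordan_Normal_Form matrices of type complex mat.
  Tensor products of C^m with C^m use the index convention (a,b) to a*m+b.\<close>

definition mtrace :: "complex mat \<Rightarrow> complex" where
  "mtrace A = (\<Sum>i<dim_row A. A $$ (i,i))"

definition kron :: "complex mat \<Rightarrow> complex mat \<Rightarrow> complex mat" where
  "kron A B = mat (dim_row A * dim_row B) (dim_col A * dim_col B)
     (\<lambda>(i,j). A $$ (i div dim_row B, j div dim_col B) * B $$ (i mod dim_row B, j mod dim_col B))"

definition hermitian :: "complex mat \<Rightarrow> bool" where
  "hermitian A \<longleftrightarrow> A \<in> carrier_mat (dim_row A) (dim_row A) \<and> mat_adjoint A = A"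

definition psd :: "complex mat \<Rightarrow> bool" where
  "psd A \<longleftrightarrow> hermitian A \<and>
     (\<forall>v \<in> carrier_vec (dim_row A). 0 \<le> Re (conjugate v \<bullet> (A *\<^sub>v v)))"

definition bipartite_state :: "nat \<Rightarrow> complex mat \<Rightarrow> bool" where
  "bipartite_state m \<psi> \<longleftrightarrow> \<psi> \<in> carrier_mat (m*m) (m*m) \<and> psd \<psi> \<and> mtrace \<psi> = 1"

definition ptrace_B :: "nat \<Rightarrow> complex mat \<Rightarrow> complex mat" where
  "ptrace_B m \<psi> = mat m m (\<lambda>(i,j). \<Sum>b<m. \<psi> $$ (i*m+b, j*m+b))"

definition ptrace_A :: "nat \<Rightarrow> complex mat \<Rightarrow> complex mat" where
  "ptrace_A m \<psi> = mat m m (\<lambda>(i,j). \<Sum>a<m. \<psi> $$ (a*m+i, a*m+j))"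

definition max_corr :: "nat \<Rightarrow> complex mat \<Rightarrow> real" where
  "max_corr m \<psi> = Sup {cmod (mtrace (kron (mat_adjoint P) Q * \<psi>)) | P Q.
      P \<in> carrier_mat m m \<and> Q \<in> carrier_mat m m \<and> mtrace P = 0 \<and> mtrace Q = 0 \<and>
      mtrace (mat_adjoint P * P) / of_nat m = 1 \<and> mtrace (mat_adjoint Q * Q) / of_nat m = 1}"

definition noisy_max_ent :: "nat \<Rightarrow> complex mat \<Rightarrow> bool" where
  "noisy_max_ent m \<psi> \<longleftrightarrow> bipartite_state m \<psi> \<and>
     ptrace_B m \<psi> = (1 / of_nat m) \<cdot>\<^sub>m 1\<^sub>m m \<and>
     ptrace_A m \<psi> = (1 / of_nat m) \<cdot>\<^sub>m 1\<^sub>m m \<and>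
     max_corr m \<psi> < 1"

definition std_onb :: "nat \<Rightarrow> (nat \<Rightarrow> complex mat) \<Rightarrow> bool" where
  "std_onb m \<B> \<longleftrightarrow>
     (\<forall>i<m^2. \<B> i \<in> carrier_mat m m \<and> hermitian (\<B> i)) \<and>
     \<B> 0 = 1\<^sub>m m \<and>
     (\<forall>i<m^2. \<forall>j<m^2. mtrace (mat_adjoint (\<B> i) * \<B> j) / of_nat m = (if i = j then 1 else 0)) \<and>
     (\<forall>X \<in> carrier_mat m m. \<exists>c :: nat \<Rightarrow> complex.
        (\<forall>a<m. \<forall>b<m. X $$ (a,b) = (\<Sum>i<m^2. c i * \<B> i $$ (a,b))))"

definition corr_mat :: "nat \<Rightarrow> complex mat \<Rightarrow> (nat \<Rightarrow> complex mat) \<Rightarrow> (nat \<Rightarrow> complex mat) \<Rightarrow> complex mat" where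
  "corr_mat m \<psi> \<A> \<B> = mat (m^2) (m^2) (\<lambda>(i,j). mtrace (kron (\<A> i) (\<B> j) * \<psi>))"

text \<open>s is the list of singular values of the square matrix C, in non-increasing order
  (with multiplicity): the squares of its entries are the eigenvalues of C^dagger C,
  counted with algebraic multiplicity.\<close>
definition singular_values :: "complex mat \<Rightarrow> real list \<Rightarrow> bool" where
  "singular_values C s \<longleftrightarrow> length s = dim_col C \<and> sorted_wrt (\<ge>) s \<and> (\<forall>x\<in>set s. 0 \<le> x) \<and>
     char_poly (mat_adjoint C * C) = (\<Prod>x\<leftarrow>s. [: - complex_of_real (x^2), 1 :])"

end

theory Submission
  imports Defs "Jordan_Normal_Form.Spectral_Radius"
begin

definition rmm :: "nat \<Rightarrow> (nat \<Rightarrow> nat \<Rightarrow> real) \<Rightarrow> (nat \<Rightarrow> nat \<Rightarrow> real) \<Rightarrow> nat \<Rightarrow> nat \<Rightarrow> real" where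
  "rmm n A B = (\<lambda>i j. \<Sum>k<n. A i k * B k j)"
definition rtr :: "(nat \<Rightarrow> nat \<Rightarrow> real) \<Rightarrow> nat \<Rightarrow> nat \<Rightarrow> real" where
  "rtr A = (\<lambda>i j. A j i)"
definition rId :: "nat \<Rightarrow> nat \<Rightarrow> real" where
  "rId = (\<lambda>i j. if i = j then 1 else 0)"
definition rorth :: "nat \<Rightarrow> (nat \<Rightarrow> nat \<Rightarrow> real) \<Rightarrow> bool" where
  "rorth n U \<longleftrightarrow> (\<forall>i<n. \<forall>j<n. rmm n (rtr U) U i j = rId i j) \<and> (\<forall>i<n. \<forall>j<n. rmm n U (rtr U) i j = rId i j)"
definition rblk :: "real \<Rightarrow> (nat \<Rightarrow> nat \<Rightarrow> real) \<Rightarrow> nat \<Rightarrow> nat \<Rightarrow> real" where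
  "rblk a X = (\<lambda>i j. if i = 0 \<and> j = 0 then a else if i = 0 \<or> j = 0 then 0 else X (i-1) (j-1))"

lemma rmm_assoc: "rmm n (rmm n A B) C = rmm n A (rmm n B C)"
proof (intro ext)
  fix i j
  have "rmm n (rmm n A B) C i j = (\<Sum>l<n. \<Sum>k<n. A i k * B k l * C l j)"
    unfolding rmm_def by (simp add: sum_distrib_right)
  also have "\<dots> = (\<Sum>k<n. \<Sum>l<n. A i k * B k l * C l j)"
    by (rule sum.swap)
  also have "\<dots> = rmm n A (rmm n B C) i j"
    unfolding rmm_def by (simp add: sum_distrib_left mult.assoc)
  finally show "rmm n (rmm n A B) C i j = rmm n A (rmm n B C) i j" .
qed

lemma rtr_rmm: "rtr (rmm n A B) = rmm n (rtr B) (rtr A)"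
  unfolding rmm_def rtr_def by (intro ext) (simp add: mult.commute)

lemma rtr_rtr[simp]: "rtr (rtr A) = A" unfolding rtr_def by simp

lemma rmm_rblk: "rmm (Suc n) (rblk a X) (rblk b Y) = rblk (a*b) (rmm n X Y)"
  unfolding rmm_def rblk_def
  apply (intro ext)
  apply (subst sum.lessThan_Suc_shift)
  apply simp
  done

lemma rtr_rblk: "rtr (rblk a X) = rblk a (rtr X)"
  unfolding rtr_def rblk_def by (intro ext) auto

lemma rblk_Id: "rblk 1 rId = rId"
  unfolding rblk_def rId_def by (intro ext) auto

lemma rmm_Id_left: "k < n \<Longrightarrow> rmm n rId B k j = B k j"
proof -
  assume k: "k < n"
  have "rmm n rId B k j = (\<Sum>l<n. if l = k then B k j else 0)"
    unfolding rmm_def rId_def by (rule sum.cong) auto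
  thus ?thesis using k by simp
qed

lemma rmm_Id_right: "j < n \<Longrightarrow> rmm n B rId k j = B k j"
proof -
  assume j: "j < n"
  have "rmm n B rId k j = (\<Sum>l<n. if l = j then B k j else 0)"
    unfolding rmm_def rId_def by (rule sum.cong) auto
  thus ?thesis using j by simp
qed

lemma rmm_mid_Id:
  assumes "\<forall>k<n. \<forall>l<n. Q k l = rId k l"
  shows "rmm n X (rmm n Q Y) i j = rmm n X Y i j"
proof -
  have "rmm n Q Y k j = Y k j" if "k < n" for k
  proof -
    have "rmm n Q Y k j = rmm n rId Y k j" unfolding rmm_def using assms that by simp
    thus ?thesis using rmm_Id_left[OF that] by simp
  qed
  thus ?thesis unfolding rmm_def[of n X] by simp
qed

lemma rblk_Id_on:
  assumes "\<forall>i<n. \<forall>j<n. Q i j = rId i j" "i < Suc n" "j < Suc n"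
  shows "rblk 1 Q i j = rId i j"
  using assms unfolding rblk_def rId_def
  by (cases i; cases j; simp)

lemma rorth_rblk: assumes "rorth n X" shows "rorth (Suc n) (rblk 1 X)"
proof -
  have a: "\<forall>i<n. \<forall>j<n. rmm n (rtr X) X i j = rId i j" and b: "\<forall>i<n. \<forall>j<n. rmm n X (rtr X) i j = rId i j"
    using assms unfolding rorth_def by auto
  show ?thesis unfolding rorth_def rtr_rblk rmm_rblk
    using rblk_Id_on[OF a] rblk_Id_on[OF b] by simp
qed

lemma rorth_rmm: assumes A: "rorth n A" and B: "rorth n B" shows "rorth n (rmm n A B)"
proof -
  have "rmm n (rtr (rmm n A B)) (rmm n A B) i j = rId i j" if "i<n" "j<n" for i j
  proof -
    have "rmm n (rtr (rmm n A B)) (rmm n A B) i j = rmm n (rtr B) (rmm n (rmm n (rtr A) A) B) i j"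
      by (simp only: rtr_rmm rmm_assoc)
    also have "\<dots> = rmm n (rtr B) B i j"
      by (rule rmm_mid_Id) (use A in \<open>simp add: rorth_def\<close>)
    finally show ?thesis using B that by (simp add: rorth_def)
  qed
  moreover have "rmm n (rmm n A B) (rtr (rmm n A B)) i j = rId i j" if "i<n" "j<n" for i j
  proof -
    have "rmm n (rmm n A B) (rtr (rmm n A B)) i j = rmm n A (rmm n (rmm n B (rtr B)) (rtr A)) i j"
      by (simp only: rtr_rmm rmm_assoc)
    also have "\<dots> = rmm n A (rtr A) i j"
      by (rule rmm_mid_Id) (use B in \<open>simp add: rorth_def\<close>)
    finally show ?thesis using A that by (simp add: rorth_def)
  qed
  ultimately show ?thesis unfolding rorth_def by blast
qed

definition hh :: "(nat \<Rightarrow> real) \<Rightarrow> nat \<Rightarrow> nat \<Rightarrow> real" where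
  "hh u = (\<lambda>i j. rId i j - (if u 0 = 1 then 0 else (rId i 0 - u i) * (rId j 0 - u j) / (1 - u 0)))"

lemma hh_sym: "rtr (hh u) = hh u"
  unfolding hh_def rtr_def rId_def by (intro ext) (simp add: mult.commute)

lemma unit_e0:
  fixes u :: "nat \<Rightarrow> real"
  assumes n: "0 < n" and u: "(\<Sum>k<n. (u k)^2) = 1" and u0: "u 0 = 1" and i: "i < n" "i \<noteq> 0"
  shows "u i = 0"
proof -
  have "(\<Sum>k<n. (u k)^2) = (u 0)^2 + (\<Sum>k\<in>{..<n}-{0}. (u k)^2)"
    by (rule sum.remove) (use n in auto)
  hence z: "(\<Sum>k\<in>{..<n}-{0}. (u k)^2) = 0" using u u0 by simp
  have "(u i)^2 = 0"
    using sum_nonneg_eq_0_iff[of "{..<n}-{0}" "\<lambda>k. (u k)^2"] z i by auto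
  thus ?thesis by simp
qed

lemma hh_col0:
  assumes n: "0 < n" and u: "(\<Sum>k<n. (u k)^2) = 1" and i: "i < n"
  shows "hh u i 0 = u i"
proof (cases "u 0 = 1")
  case True
  thus ?thesis using unit_e0[OF n u True i] unfolding hh_def rId_def by (cases "i = 0") auto
next
  case False
  hence "1 - u 0 \<noteq> 0" by simp
  thus ?thesis unfolding hh_def rId_def by (cases "i = 0") (auto simp: field_simps)
qed

lemma rId_sum1: "i < n \<Longrightarrow> (\<Sum>k<n. rId k i * f k) = f i"
proof -
  assume i: "i < n"
  have "(\<Sum>k<n. rId k i * f k) = (\<Sum>k<n. if k = i then f i else 0)"
    unfolding rId_def by (rule sum.cong) auto
  thus ?thesis using i by simp
qed

lemma rId_sum2: "i < n \<Longrightarrow> (\<Sum>k<n. rId i k * f k) = f i"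
proof -
  assume i: "i < n"
  have "(\<Sum>k<n. rId i k * f k) = (\<Sum>k<n. if k = i then f i else 0)"
    unfolding rId_def by (rule sum.cong) auto
  thus ?thesis using i by simp
qed

lemma hh_sq:
  assumes n: "0 < n" and u: "(\<Sum>k<n. (u k)^2) = 1" and i: "i < n" and j: "j < n"
  shows "rmm n (hh u) (hh u) i j = rId i j"
proof (cases "u 0 = 1")
  case True
  hence "hh u = rId" unfolding hh_def by (intro ext) simp
  thus ?thesis using rmm_Id_left[OF i] by simp
next
  case False
  define d where "d = 1 - u 0"
  define w where "w = (\<lambda>k. rId k 0 - u k)"
  have d: "d \<noteq> 0" using False unfolding d_def by simp
  have hw: "hh u = (\<lambda>i j. rId i j - w i * w j / d)"
    unfolding hh_def w_def d_def using False by (intro ext) simp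
  have S1: "(\<Sum>k<n. rId i k * rId k j) = rId i j" using rmm_Id_left[OF i, of rId j] unfolding rmm_def .
  have S2: "(\<Sum>k<n. w k * rId k j) = w j" using rmm_Id_right[OF j, of "\<lambda>_ k. w k"] unfolding rmm_def .
  have S3: "(\<Sum>k<n. rId i k * w k) = w i" using rmm_Id_left[OF i, of "\<lambda>k _. w k"] unfolding rmm_def .
  have S4: "(\<Sum>k<n. (w k)^2) = 2 * d"
  proof -
    have "(\<Sum>k<n. (w k)^2) = (\<Sum>k<n. rId k 0 * rId k 0) - 2 * (\<Sum>k<n. rId k 0 * u k) + (\<Sum>k<n. (u k)^2)"
      unfolding w_def by (simp add: power2_eq_square algebra_simps sum.distrib sum_subtractf sum_distrib_left)
    also have "(\<Sum>k<n. rId k 0 * rId k 0) = 1" using rId_sum1[OF n, of "\<lambda>k. rId k 0"] by (simp add: rId_def)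
    also have "(\<Sum>k<n. rId k 0 * u k) = u 0" using rId_sum1[OF n, of u] by simp
    finally show ?thesis using u unfolding d_def by simp
  qed
  have "rmm n (hh u) (hh u) i j = (\<Sum>k<n. rId i k * rId k j - (w i / d) * (w k * rId k j)
       - (w j / d) * (rId i k * w k) + (w i * w j / d^2) * (w k)^2)"
    unfolding hw rmm_def
    using d by (intro sum.cong) (auto simp: field_simps power2_eq_square)
  also have "\<dots> = rId i j - (w i / d) * w j - (w j / d) * w i + (w i * w j / d^2) * (2 * d)"
    by (simp only: sum.distrib sum_subtractf sum_distrib_left[symmetric] S1 S2 S3 S4)
  also have "\<dots> = rId i j" using d by (simp add: field_simps power2_eq_square)
  finally show ?thesis .
qed

lemma rorth_hh:
  assumes n: "0 < n" and u: "(\<Sum>k<n. (u k)^2) = 1"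
  shows "rorth n (hh u)"
  unfolding rorth_def hh_sym using hh_sq[OF n u] by simp

lemma hh_u:
  assumes n: "0 < n" and u: "(\<Sum>k<n. (u k)^2) = 1" and i: "i < n"
  shows "(\<Sum>k<n. hh u i k * u k) = rId i 0"
proof -
  have "(\<Sum>k<n. hh u i k * u k) = (\<Sum>k<n. hh u i k * hh u k 0)"
    by (rule sum.cong) (auto simp: hh_col0[OF n u])
  also have "\<dots> = rmm n (hh u) (hh u) i 0" unfolding rmm_def by simp
  also have "\<dots> = rId i 0" using hh_sq[OF n u i n] .
  finally show ?thesis .
qed

lemma real_sym_eigen:
  fixes M :: "nat \<Rightarrow> nat \<Rightarrow> real"
  assumes n: "0 < n" and sym: "\<forall>i<n. \<forall>j<n. M i j = M j i"
  shows "\<exists>lam v. (\<exists>i<n. v i \<noteq> 0) \<and> (\<forall>i<n. (\<Sum>j<n. M i j * v j) = lam * v i)"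
proof -
  define A where "A = mat n n (\<lambda>(i,j). complex_of_real (M i j))"
  have A: "A \<in> carrier_mat n n" unfolding A_def by simp
  from spectrum_non_empty[OF A n] obtain e where "e \<in> spectrum A" by blast
  hence "eigenvalue A e" unfolding spectrum_def by simp
  then obtain w where "eigenvector A w e" unfolding eigenvalue_def by blast
  hence w: "w \<in> carrier_vec n" and w0: "w \<noteq> 0\<^sub>v n" and Aw: "A *\<^sub>v w = e \<cdot>\<^sub>v w"
    unfolding eigenvector_def using A by auto
  have ev: "(\<Sum>j<n. complex_of_real (M i j) * w$j) = e * w$i" if i: "i < n" for i
  proof -
    have "(A *\<^sub>v w) $ i = (e \<cdot>\<^sub>v w) $ i" using Aw by simp
    thus ?thesis using i w A unfolding A_def
      by (simp add: scalar_prod_def atLeast0LessThan)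
  qed
  obtain i0 where i0: "i0 < n" "w $ i0 \<noteq> 0"
  proof -
    have "\<exists>i<n. w $ i \<noteq> 0"
    proof (rule ccontr)
      assume "\<not> ?thesis"
      hence "w = 0\<^sub>v n" using w by (intro eq_vecI) auto
      thus False using w0 by simp
    qed
    thus ?thesis using that by blast
  qed
  define S where "S = (\<Sum>i<n. cnj (w$i) * (\<Sum>j<n. complex_of_real (M i j) * w$j))"
  define N where "N = (\<Sum>i<n. cnj (w$i) * w$i)"
  have SN: "S = e * N" unfolding S_def N_def
    by (simp add: ev sum_distrib_left mult.assoc mult.left_commute)
  have cS: "cnj S = S"
  proof -
    have "cnj S = (\<Sum>i<n. \<Sum>j<n. complex_of_real (M i j) * (w$i * cnj (w$j)))"
      unfolding S_def by (simp add: sum_distrib_left mult.assoc mult.left_commute)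
    also have "\<dots> = (\<Sum>j<n. \<Sum>i<n. complex_of_real (M i j) * (w$i * cnj (w$j)))"
      by (rule sum.swap)
    also have "\<dots> = (\<Sum>j<n. \<Sum>i<n. complex_of_real (M j i) * (cnj (w$j) * w$i))"
    proof (intro sum.cong refl)
      fix i j assume "i \<in> {..<n}" "j \<in> {..<n}"
      hence "M i j = M j i" using sym by simp
      thus "complex_of_real (M j i) * (w$j * cnj (w$i)) = complex_of_real (M i j) * (cnj (w$i) * w$j)"
        by (simp only: mult.commute[of "w$j"])
    qed
    also have "\<dots> = S"
      unfolding S_def by (simp add: sum_distrib_left mult.assoc mult.left_commute)
    finally show ?thesis .
  qed
  have ImS: "Im S = 0"
  proof -
    have "Im (cnj S) = Im S" using cS by simp
    thus ?thesis by simp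
  qed
  have NR: "N = complex_of_real (\<Sum>i<n. (cmod (w$i))^2)"
  proof -
    have "cnj (w$i) * w$i = complex_of_real ((cmod (w$i))^2)" for i
      using complex_norm_square[of "w$i"] by (simp add: mult.commute)
    thus ?thesis unfolding N_def of_real_sum by simp
  qed
  have Npos: "(\<Sum>i<n. (cmod (w$i))^2) > 0"
  proof -
    have "(\<Sum>i<n. (cmod (w$i))^2) \<ge> (cmod (w$i0))^2"
      by (rule member_le_sum) (use i0 in auto)
    moreover have "(cmod (w$i0))^2 > 0" using i0 by simp
    ultimately show ?thesis by linarith
  qed
  have Ime: "Im e = 0"
  proof -
    have "Im S = Im e * (\<Sum>i<n. (cmod (w$i))^2)" unfolding SN NR by simp
    thus ?thesis using ImS Npos by simp
  qed
  have evR: "(\<Sum>j<n. M i j * Re (w$j)) = Re e * Re (w$i)" if i: "i < n" for i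
  proof -
    have "Re (\<Sum>j<n. complex_of_real (M i j) * w$j) = Re (e * w$i)" using ev[OF i] by simp
    thus ?thesis using Ime by (simp add: Re_sum)
  qed
  have evI: "(\<Sum>j<n. M i j * Im (w$j)) = Re e * Im (w$i)" if i: "i < n" for i
  proof -
    have "Im (\<Sum>j<n. complex_of_real (M i j) * w$j) = Im (e * w$i)" using ev[OF i] by simp
    thus ?thesis using Ime by (simp add: Im_sum)
  qed
  show ?thesis
  proof (cases "Re (w$i0) = 0")
    case True
    have "Im (w$i0) \<noteq> 0"
    proof
      assume "Im (w$i0) = 0"
      with True have "w$i0 = 0" by (simp add: complex_eq_iff)
      with i0 show False by simp
    qed
    show ?thesis
      by (rule exI[of _ "Re e"], rule exI[of _ "\<lambda>j. Im (w$j)"]) (use evI i0 \<open>Im (w$i0) \<noteq> 0\<close> in auto)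
  next
    case False
    show ?thesis
      by (rule exI[of _ "Re e"], rule exI[of _ "\<lambda>j. Re (w$j)"]) (use evR i0 False in auto)
  qed
qed

lemma quad_form:
  fixes K :: "nat \<Rightarrow> nat \<Rightarrow> real"
  shows "(\<Sum>i<n. (\<Sum>k<n. K i k * v k)^2) = (\<Sum>k<n. v k * (\<Sum>l<n. rmm n (rtr K) K k l * v l))"
proof -
  have "(\<Sum>i<n. (\<Sum>k<n. K i k * v k)^2) = (\<Sum>i<n. \<Sum>k<n. \<Sum>l<n. K i k * v k * (K i l * v l))"
    by (simp add: power2_eq_square sum_product)
  also have "\<dots> = (\<Sum>k<n. \<Sum>i<n. \<Sum>l<n. K i k * v k * (K i l * v l))"
    by (rule sum.swap)
  also have "\<dots> = (\<Sum>k<n. \<Sum>l<n. \<Sum>i<n. K i k * v k * (K i l * v l))"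
    by (rule sum.cong[OF refl], rule sum.swap)
  also have "\<dots> = (\<Sum>k<n. v k * (\<Sum>l<n. rmm n (rtr K) K k l * v l))"
    unfolding rmm_def rtr_def
    by (simp add: sum_distrib_left sum_distrib_right mult.assoc mult.left_commute)
  finally show ?thesis .
qed

lemma ker_transpose:
  fixes K :: "nat \<Rightarrow> nat \<Rightarrow> real"
  assumes v: "\<exists>i<n. v i \<noteq> 0" and Kv: "\<forall>i<n. (\<Sum>k<n. K i k * v k) = 0"
  shows "\<exists>u. (\<exists>i<n. u i \<noteq> 0) \<and> (\<forall>i<n. (\<Sum>k<n. K k i * u k) = 0)"
proof -
  define Km where "Km = mat n n (\<lambda>(i,j). K i j)"
  have Km: "Km \<in> carrier_mat n n" unfolding Km_def by simp
  define vv where "vv = vec n v"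
  have vv: "vv \<in> carrier_vec n" unfolding vv_def by simp
  have vv0: "vv \<noteq> 0\<^sub>v n"
  proof
    assume "vv = 0\<^sub>v n"
    hence "\<forall>i<n. v i = 0" unfolding vv_def by (metis index_vec index_zero_vec(1))
    thus False using v by blast
  qed
  have "Km *\<^sub>v vv = 0\<^sub>v n"
    by (rule eq_vecI) (use Kv in \<open>auto simp: Km_def vv_def scalar_prod_def atLeast0LessThan\<close>)
  hence "det Km = 0" using det_0_iff_vec_prod_zero_field[OF Km] vv vv0 by blast
  hence "det (transpose_mat Km) = 0" using det_transpose[OF Km] by simp
  then obtain uu where uu: "uu \<in> carrier_vec n" "uu \<noteq> 0\<^sub>v n" "transpose_mat Km *\<^sub>v uu = 0\<^sub>v n"
    using det_0_iff_vec_prod_zero_field[of "transpose_mat Km" n] Km by auto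
  have ex: "\<exists>i<n. uu $ i \<noteq> 0"
  proof (rule ccontr)
    assume "\<not> ?thesis"
    hence "uu = 0\<^sub>v n" using uu(1) by (intro eq_vecI) auto
    thus False using uu(2) by simp
  qed
  have "(\<Sum>k<n. K k i * uu $ k) = 0" if i: "i < n" for i
  proof -
    have "(transpose_mat Km *\<^sub>v uu) $ i = 0" using uu(3) i by simp
    thus ?thesis using i uu(1) Km unfolding Km_def
      by (simp add: scalar_prod_def atLeast0LessThan)
  qed
  thus ?thesis using ex by (intro exI[of _ "\<lambda>k. uu $ k"]) auto
qed

lemma normalize_vec:
  fixes v :: "nat \<Rightarrow> real"
  assumes "\<exists>i<n. v i \<noteq> 0"
  shows "(\<Sum>k<n. (v k)^2) > 0" "(\<Sum>k<n. (v k / sqrt (\<Sum>k<n. (v k)^2))^2) = 1"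
proof -
  from assms obtain i where i: "i < n" "v i \<noteq> 0" by blast
  have "(\<Sum>k<n. (v k)^2) \<ge> (v i)^2" by (rule member_le_sum) (use i in auto)
  moreover have "(v i)^2 > 0" using i by simp
  ultimately show pos: "(\<Sum>k<n. (v k)^2) > 0" by linarith
  have "(\<Sum>k<n. (v k / sqrt (\<Sum>k<n. (v k)^2))^2) = (\<Sum>k<n. (v k)^2) / (\<Sum>k<n. (v k)^2)"
    using pos by (simp add: power_divide sum_divide_distrib[symmetric])
  thus "(\<Sum>k<n. (v k / sqrt (\<Sum>k<n. (v k)^2))^2) = 1" using pos by simp
qed

lemma KtK_swap:
  fixes K :: "nat \<Rightarrow> nat \<Rightarrow> real"
  shows "(\<Sum>k<n. K k i * (\<Sum>l<n. K k l * v l)) = (\<Sum>l<n. rmm n (rtr K) K i l * v l)"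
proof -
  have "(\<Sum>k<n. K k i * (\<Sum>l<n. K k l * v l)) = (\<Sum>k<n. \<Sum>l<n. K k i * K k l * v l)"
    by (simp add: sum_distrib_left mult.assoc)
  also have "\<dots> = (\<Sum>l<n. \<Sum>k<n. K k i * K k l * v l)" by (rule sum.swap)
  also have "\<dots> = (\<Sum>l<n. rmm n (rtr K) K i l * v l)"
    unfolding rmm_def rtr_def by (simp add: sum_distrib_right)
  finally show ?thesis .
qed

lemma sing_pair:
  fixes K :: "nat \<Rightarrow> nat \<Rightarrow> real"
  assumes n: "0 < n"
  shows "\<exists>u v \<sigma>. \<sigma> \<ge> 0 \<and> (\<Sum>k<n. (u k)^2) = 1 \<and> (\<Sum>k<n. (v k)^2) = 1 \<and>
     (\<forall>i<n. (\<Sum>k<n. K i k * v k) = \<sigma> * u i) \<and> (\<forall>i<n. (\<Sum>k<n. K k i * u k) = \<sigma> * v i)"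
proof -
  define M where "M = rmm n (rtr K) K"
  have sym: "\<forall>i<n. \<forall>j<n. M i j = M j i" unfolding M_def rmm_def rtr_def by (simp add: mult.commute)
  obtain lam v0 where v0: "\<exists>i<n. v0 i \<noteq> 0" and Mv0: "\<forall>i<n. (\<Sum>j<n. M i j * v0 j) = lam * v0 i"
    using real_sym_eigen[OF n sym] by blast
  define s where "s = sqrt (\<Sum>k<n. (v0 k)^2)"
  have s: "s > 0" unfolding s_def using normalize_vec(1)[OF v0] by simp
  define v where "v = (\<lambda>k. v0 k / s)"
  have vn: "(\<Sum>k<n. (v k)^2) = 1" unfolding v_def s_def using normalize_vec(2)[OF v0] .
  have v_nz: "\<exists>i<n. v i \<noteq> 0" using v0 s unfolding v_def by auto
  have Mv: "(\<Sum>j<n. M i j * v j) = lam * v i" if i: "i < n" for i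
  proof -
    have "(\<Sum>j<n. M i j * v j) = (\<Sum>j<n. M i j * v0 j) / s"
      unfolding v_def by (simp add: sum_divide_distrib)
    thus ?thesis using Mv0 i unfolding v_def by simp
  qed
  define Kv where "Kv = (\<lambda>i. \<Sum>k<n. K i k * v k)"
  have hq: "(\<Sum>i<n. (Kv i)^2) = lam"
  proof -
    have "(\<Sum>i<n. (Kv i)^2) = (\<Sum>k<n. v k * (\<Sum>l<n. M k l * v l))"
      unfolding Kv_def M_def by (rule quad_form)
    also have "\<dots> = (\<Sum>k<n. lam * (v k)^2)"
      by (rule sum.cong[OF refl]) (simp add: Mv power2_eq_square)
    also have "\<dots> = lam" using vn by (simp add: sum_distrib_left[symmetric])
    finally show ?thesis .
  qed
  have lam0: "lam \<ge> 0" using hq[symmetric] by (simp add: sum_nonneg)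
  have KtKv: "(\<Sum>k<n. K k i * Kv k) = lam * v i" if i: "i < n" for i
    unfolding Kv_def KtK_swap using Mv[OF i] unfolding M_def .
  show ?thesis
  proof (cases "lam = 0")
    case False
    hence lp: "lam > 0" using lam0 by simp
    define \<sigma> where "\<sigma> = sqrt lam"
    have sp: "\<sigma> > 0" unfolding \<sigma>_def using lp by simp
    have ss: "\<sigma> * \<sigma> = lam" unfolding \<sigma>_def using lp by simp
    define u where "u = (\<lambda>i. Kv i / \<sigma>)"
    have un: "(\<Sum>k<n. (u k)^2) = 1"
    proof -
      have "(\<Sum>k<n. (u k)^2) = (\<Sum>k<n. (Kv k)^2) / lam"
        unfolding u_def using ss by (simp add: power_divide sum_divide_distrib power2_eq_square)
      thus ?thesis using hq lp by simp
    qed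
    have c1: "\<forall>i<n. (\<Sum>k<n. K i k * v k) = \<sigma> * u i"
      using sp unfolding u_def Kv_def by simp
    have c2: "\<forall>i<n. (\<Sum>k<n. K k i * u k) = \<sigma> * v i"
    proof (intro allI impI)
      fix i assume i: "i < n"
      have "(\<Sum>k<n. K k i * u k) = (\<Sum>k<n. K k i * Kv k) / \<sigma>"
        unfolding u_def by (simp add: sum_divide_distrib)
      also have "\<dots> = \<sigma> * v i" using KtKv[OF i] ss sp by (simp add: field_simps)
      finally show "(\<Sum>k<n. K k i * u k) = \<sigma> * v i" .
    qed
    show ?thesis
      by (rule exI[of _ u], rule exI[of _ v], rule exI[of _ \<sigma>]) (use sp un vn c1 c2 in simp)
  next
    case True
    have Kv0: "\<forall>i<n. (\<Sum>k<n. K i k * v k) = 0"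
    proof (intro allI impI)
      fix i assume i: "i < n"
      have "(\<Sum>i<n. (Kv i)^2) = 0" using hq True by simp
      hence "(Kv i)^2 = 0" using sum_nonneg_eq_0_iff[of "{..<n}" "\<lambda>i. (Kv i)^2"] i by simp
      thus "(\<Sum>k<n. K i k * v k) = 0" unfolding Kv_def by simp
    qed
    obtain u0 where u0: "\<exists>i<n. u0 i \<noteq> 0" and Ku0: "\<forall>i<n. (\<Sum>k<n. K k i * u0 k) = 0"
      using ker_transpose[OF v_nz Kv0] by blast
    define t where "t = sqrt (\<Sum>k<n. (u0 k)^2)"
    define u where "u = (\<lambda>k. u0 k / t)"
    have un: "(\<Sum>k<n. (u k)^2) = 1" unfolding u_def t_def using normalize_vec(2)[OF u0] .
    have c2: "\<forall>i<n. (\<Sum>k<n. K k i * u k) = 0 * v i"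
    proof (intro allI impI)
      fix i assume i: "i < n"
      have "(\<Sum>k<n. K k i * u k) = (\<Sum>k<n. K k i * u0 k) / t"
        unfolding u_def by (simp add: sum_divide_distrib)
      thus "(\<Sum>k<n. K k i * u k) = 0 * v i" using Ku0 i by simp
    qed
    have c1: "\<forall>i<n. (\<Sum>k<n. K i k * v k) = 0 * u i" using Kv0 by simp
    show ?thesis
      by (rule exI[of _ u], rule exI[of _ v], rule exI[of _ 0]) (use un vn c1 c2 in simp)
  qed
qed

lemma rmm_cong_mid:
  assumes "\<forall>a<n. \<forall>b<n. P a b = Q a b"
  shows "rmm n X (rmm n P Y) i j = rmm n X (rmm n Q Y) i j"
  unfolding rmm_def using assms by simp

lemma svd_unsorted:
  fixes K :: "nat \<Rightarrow> nat \<Rightarrow> real"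
  shows "\<exists>U V c. rorth n U \<and> rorth n V \<and> (\<forall>i. c i \<ge> 0) \<and>
     (\<forall>i<n. \<forall>j<n. rmm n (rmm n (rtr U) K) V i j = (if i = j then c i else 0))"
proof (induction n arbitrary: K)
  case 0
  show ?case
    by (rule exI[of _ rId], rule exI[of _ rId], rule exI[of _ "\<lambda>_. 0"]) (simp add: rorth_def)
next
  case (Suc n)
  define N where "N = Suc n"
  have N: "0 < N" unfolding N_def by simp
  obtain u v \<sigma> where s0: "\<sigma> \<ge> 0" and un: "(\<Sum>k<N. (u k)^2) = 1" and vn: "(\<Sum>k<N. (v k)^2) = 1"
    and Kv: "\<forall>i<N. (\<Sum>k<N. K i k * v k) = \<sigma> * u i" and Ku: "\<forall>i<N. (\<Sum>k<N. K k i * u k) = \<sigma> * v i"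
    using sing_pair[OF N, of K] by blast
  define Hu where "Hu = hh u"
  define Hv where "Hv = hh v"
  have oHu: "rorth N Hu" unfolding Hu_def by (rule rorth_hh[OF N un])
  have oHv: "rorth N Hv" unfolding Hv_def by (rule rorth_hh[OF N vn])
  have sHu: "rtr Hu = Hu" unfolding Hu_def by (rule hh_sym)
  have sHv: "rtr Hv = Hv" unfolding Hv_def by (rule hh_sym)
  have sHu': "Hu a b = Hu b a" for a b using fun_cong[OF fun_cong[OF sHu, of a], of b] unfolding rtr_def by simp
  have sHv': "Hv a b = Hv b a" for a b using fun_cong[OF fun_cong[OF sHv, of a], of b] unfolding rtr_def by simp
  have hu0: "Hu 0 k = u k" if "k < N" for k
    using sHu'[of 0 k] hh_col0[OF N un that] unfolding Hu_def by simp
  define K' where "K' = rmm N (rmm N Hu K) Hv"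
  have K'col: "K' i 0 = \<sigma> * rId i 0" if i: "i < N" for i
  proof -
    have "K' i 0 = rmm N Hu (rmm N K Hv) i 0" unfolding K'_def rmm_assoc ..
    also have "\<dots> = (\<Sum>k<N. Hu i k * (\<sigma> * u k))"
    proof (unfold rmm_def, rule sum.cong[OF refl])
      fix k assume k: "k \<in> {..<N}"
      have "(\<Sum>l<N. K k l * Hv l 0) = (\<Sum>l<N. K k l * v l)"
        by (rule sum.cong[OF refl]) (simp add: Hv_def hh_col0[OF N vn])
      thus "Hu i k * (\<Sum>l<N. K k l * Hv l 0) = Hu i k * (\<sigma> * u k)" using Kv k by simp
    qed
    also have "\<dots> = \<sigma> * (\<Sum>k<N. hh u i k * u k)"
      unfolding Hu_def by (simp add: sum_distrib_left mult.left_commute)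
    also have "\<dots> = \<sigma> * rId i 0" using hh_u[OF N un i] by simp
    finally show ?thesis .
  qed
  have K'row: "K' 0 j = \<sigma> * rId 0 j" if j: "j < N" for j
  proof -
    have "K' 0 j = (\<Sum>l<N. (\<sigma> * v l) * Hv l j)"
    proof (unfold K'_def rmm_def[of N _ Hv], rule sum.cong[OF refl])
      fix l assume l: "l \<in> {..<N}"
      have "rmm N Hu K 0 l = (\<Sum>k<N. u k * K k l)"
        unfolding rmm_def
        by (rule sum.cong[OF refl]) (simp add: hu0)
      also have "\<dots> = \<sigma> * v l" using Ku l by (simp add: mult.commute)
      finally show "rmm N Hu K 0 l * Hv l j = \<sigma> * v l * Hv l j" by simp
    qed
    also have "\<dots> = \<sigma> * (\<Sum>l<N. hh v j l * v l)"
      unfolding sum_distrib_left Hv_def[symmetric]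
    proof (rule sum.cong[OF refl])
      fix l
      show "\<sigma> * v l * Hv l j = \<sigma> * (Hv j l * v l)" using sHv'[of j l] by (simp add: ac_simps)
    qed
    also have "\<dots> = \<sigma> * rId 0 j" using hh_u[OF N vn j] by (simp add: rId_def)
    finally show ?thesis .
  qed
  define K1 where "K1 = (\<lambda>i j. K' (Suc i) (Suc j))"
  have K'blk: "\<forall>a<N. \<forall>b<N. K' a b = rblk \<sigma> K1 a b"
  proof (intro allI impI)
    fix a b assume a: "a < N" and b: "b < N"
    show "K' a b = rblk \<sigma> K1 a b"
    proof (cases "b = 0")
      case True thus ?thesis using K'col[OF a] by (simp add: rblk_def rId_def)
    next
      case False
      show ?thesis
      proof (cases "a = 0")
        case True thus ?thesis using K'row[OF b] False by (simp add: rblk_def rId_def)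
      next
        case False2: False
        thus ?thesis using False unfolding rblk_def K1_def by (cases a; cases b) auto
      qed
    qed
  qed
  obtain U1 V1 c1 where oU1: "rorth n U1" and oV1: "rorth n V1" and c1: "\<forall>i. c1 i \<ge> 0"
    and d1: "\<forall>i<n. \<forall>j<n. rmm n (rmm n (rtr U1) K1) V1 i j = (if i = j then c1 i else 0)"
    using Suc.IH[of K1] by blast
  define U where "U = rmm N Hu (rblk 1 U1)"
  define V where "V = rmm N Hv (rblk 1 V1)"
  define c where "c = (\<lambda>i. if i = 0 then \<sigma> else c1 (i - 1))"
  have oU: "rorth N U" unfolding U_def N_def
    by (rule rorth_rmm[OF oHu[unfolded N_def] rorth_rblk[OF oU1]])
  have oV: "rorth N V" unfolding V_def N_def
    by (rule rorth_rmm[OF oHv[unfolded N_def] rorth_rblk[OF oV1]])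
  have c: "\<forall>i. c i \<ge> 0" using c1 s0 unfolding c_def by simp
  have d: "rmm N (rmm N (rtr U) K) V i j = (if i = j then c i else 0)" if i: "i < N" and j: "j < N" for i j
  proof -
    have "rmm N (rmm N (rtr U) K) V i j =
          rmm N (rblk 1 (rtr U1)) (rmm N (rmm N (rmm N Hu K) Hv) (rblk 1 V1)) i j"
      unfolding U_def V_def rtr_rmm rtr_rblk sHu by (simp only: rmm_assoc)
    also have "\<dots> = rmm N (rblk 1 (rtr U1)) (rmm N (rblk \<sigma> K1) (rblk 1 V1)) i j"
      unfolding K'_def[symmetric] by (rule rmm_cong_mid[OF K'blk])
    also have "\<dots> = rblk \<sigma> (rmm n (rmm n (rtr U1) K1) V1) i j"
      unfolding N_def rmm_rblk by (simp add: rmm_assoc)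
    also have "\<dots> = (if i = j then c i else 0)"
      using d1 i j unfolding rblk_def c_def N_def
      by (cases i; cases j) auto
    finally show ?thesis .
  qed
  show ?case
    by (rule exI[of _ U], rule exI[of _ V], rule exI[of _ c]) (use oU oV c d in \<open>simp add: N_def\<close>)
qed

lemma sort_perm_exists:
  fixes c :: "nat \<Rightarrow> real"
  shows "\<exists>p. bij_betw p {..<n} {..<n} \<and> (\<forall>i j. i \<le> j \<and> j < n \<longrightarrow> c (p j) \<le> c (p i))"
proof -
  define xs where "xs = sort_key (\<lambda>i. - c i) [0..<n]"
  have len: "length xs = n" unfolding xs_def by simp
  have dist: "distinct xs" unfolding xs_def by simp
  have set: "set xs = {..<n}" unfolding xs_def by auto
  have sorted: "sorted (map (\<lambda>i. - c i) xs)" unfolding xs_def by simp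
  have bij: "bij_betw (\<lambda>i. xs ! i) {..<n} {..<n}"
  proof (rule bij_betw_imageI)
    show "inj_on (\<lambda>i. xs ! i) {..<n}" using dist len by (simp add: inj_on_def nth_eq_iff_index_eq)
    show "(\<lambda>i. xs ! i) ` {..<n} = {..<n}" using set len by (metis atLeast0LessThan atLeast_upt image_set map_nth set_map)
  qed
  have mono: "c (xs ! j) \<le> c (xs ! i)" if "i \<le> j" "j < n" for i j
  proof -
    have "map (\<lambda>i. - c i) xs ! i \<le> map (\<lambda>i. - c i) xs ! j"
      using sorted that len by (intro sorted_nth_mono) auto
    thus ?thesis using that len by simp
  qed
  show ?thesis using bij mono by blast
qed

lemma svd_sorted:
  fixes K :: "nat \<Rightarrow> nat \<Rightarrow> real"
  shows "\<exists>U V c. rorth n U \<and> rorth n V \<and> (\<forall>i. c i \<ge> 0) \<and> (\<forall>i j. i \<le> j \<and> j < n \<longrightarrow> c j \<le> c i) \<and>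
     (\<forall>i<n. \<forall>j<n. rmm n (rmm n (rtr U) K) V i j = (if i = j then c i else 0))"
proof -
  obtain U V c where oU: "rorth n U" and oV: "rorth n V" and c: "\<forall>i. c i \<ge> 0"
    and d: "\<forall>i<n. \<forall>j<n. rmm n (rmm n (rtr U) K) V i j = (if i = j then c i else 0)"
    using svd_unsorted[of n K] by blast
  obtain p where bij: "bij_betw p {..<n} {..<n}" and mono: "\<forall>i j. i \<le> j \<and> j < n \<longrightarrow> c (p j) \<le> c (p i)"
    using sort_perm_exists[of n c] by blast
  have pn: "p i < n" if "i < n" for i using bij that by (auto simp: bij_betw_def)
  have pinj: "p i = p j \<longleftrightarrow> i = j" if "i < n" "j < n" for i j
    using bij that by (auto simp: bij_betw_def inj_on_def)
  define U' where "U' = (\<lambda>k i. U k (p i))"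
  define V' where "V' = (\<lambda>k i. V k (p i))"
  have perm_orth: "rorth n (\<lambda>k i. W k (p i))" if oW: "rorth n W" for W
  proof -
    have a: "rmm n (rtr (\<lambda>k i. W k (p i))) (\<lambda>k i. W k (p i)) i j = rId i j" if "i<n" "j<n" for i j
    proof -
      have "rmm n (rtr (\<lambda>k i. W k (p i))) (\<lambda>k i. W k (p i)) i j = rmm n (rtr W) W (p i) (p j)"
        unfolding rmm_def rtr_def by simp
      also have "\<dots> = rId (p i) (p j)" using oW pn that unfolding rorth_def by simp
      also have "\<dots> = rId i j" unfolding rId_def using pinj that by simp
      finally show ?thesis .
    qed
    have b: "rmm n (\<lambda>k i. W k (p i)) (rtr (\<lambda>k i. W k (p i))) i j = rId i j" if "i<n" "j<n" for i j
    proof -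
      have "rmm n (\<lambda>k i. W k (p i)) (rtr (\<lambda>k i. W k (p i))) i j = (\<Sum>k<n. W i (p k) * W j (p k))"
        unfolding rmm_def rtr_def by simp
      also have "\<dots> = (\<Sum>k<n. W i k * W j k)"
        using sum.reindex_bij_betw[OF bij, of "\<lambda>k. W i k * W j k"] by simp
      also have "\<dots> = rmm n W (rtr W) i j" unfolding rmm_def rtr_def by simp
      also have "\<dots> = rId i j" using oW that unfolding rorth_def by simp
      finally show ?thesis .
    qed
    show ?thesis unfolding rorth_def using a b by blast
  qed
  have dd: "rmm n (rmm n (rtr U') K) V' i j = (if i = j then c (p i) else 0)" if "i<n" "j<n" for i j
  proof -
    have "rmm n (rmm n (rtr U') K) V' i j = rmm n (rmm n (rtr U) K) V (p i) (p j)"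
      unfolding rmm_def rtr_def U'_def V'_def by simp
    also have "\<dots> = (if p i = p j then c (p i) else 0)" using d pn that by simp
    also have "\<dots> = (if i = j then c (p i) else 0)" using pinj that by simp
    finally show ?thesis .
  qed
  show ?thesis
    by (rule exI[of _ U'], rule exI[of _ V'], rule exI[of _ "\<lambda>i. c (p i)"])
       (use perm_orth[OF oU] perm_orth[OF oV] c mono dd in \<open>simp add: U'_def V'_def\<close>)
qed

lemma rmm_cong_right: "(\<forall>k<n. F k j = G k j) \<Longrightarrow> rmm n X F i j = rmm n X G i j"
  unfolding rmm_def by simp

lemma rmm_UUt: assumes "rorth n U" "k < n" shows "rmm n U (rmm n (rtr U) Y) k j = Y k j"
proof -
  have "rmm n U (rmm n (rtr U) Y) k j = rmm n (rmm n U (rtr U)) Y k j" by (simp only: rmm_assoc)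
  also have "\<dots> = rmm n rId Y k j"
    unfolding rmm_def[of n "rmm n U (rtr U)"] rmm_def[of n rId] using assms unfolding rorth_def by simp
  also have "\<dots> = Y k j" using rmm_Id_left[OF assms(2)] .
  finally show ?thesis .
qed

lemma rmm_UtU: assumes "rorth n U" "k < n" shows "rmm n (rtr U) (rmm n U Y) k j = Y k j"
proof -
  have "rmm n (rtr U) (rmm n U Y) k j = rmm n (rmm n (rtr U) U) Y k j" by (simp only: rmm_assoc)
  also have "\<dots> = rmm n rId Y k j"
    unfolding rmm_def[of n "rmm n (rtr U) U"] rmm_def[of n rId] using assms unfolding rorth_def by simp
  also have "\<dots> = Y k j" using rmm_Id_left[OF assms(2)] .
  finally show ?thesis .
qed

lemma svd_gram:
  assumes oU: "rorth n U" and oV: "rorth n V"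
    and d: "\<forall>i<n. \<forall>j<n. rmm n (rmm n (rtr U) K) V i j = (if i = j then c i else 0)"
    and i: "i < n" and j: "j < n"
  shows "rmm n (rtr K) K i j = (\<Sum>a<n. V i a * (c a)^2 * V j a)"
proof -
  define D where "D = rmm n (rmm n (rtr U) K) V"
  define G where "G = rmm n (rtr K) K"
  have s1: "rmm n (rtr D) D a b = rmm n (rtr V) (rmm n G V) a b" if b: "b < n" for a b
  proof -
    have "rmm n (rtr D) D a b = rmm n (rtr V) (rmm n (rtr K) (rmm n U (rmm n (rtr U) (rmm n K V)))) a b"
      unfolding D_def by (simp only: rtr_rmm rtr_rtr rmm_assoc)
    also have "\<dots> = rmm n (rtr V) (rmm n (rtr K) (rmm n K V)) a b"
      by (rule rmm_cong_right, intro allI impI, rule rmm_cong_right, intro allI impI, rule rmm_UUt[OF oU])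
    also have "\<dots> = rmm n (rtr V) (rmm n G V) a b" unfolding G_def by (simp only: rmm_assoc)
    finally show ?thesis .
  qed
  have s2: "G i j = rmm n V (rmm n (rmm n (rtr D) D) (rtr V)) i j"
  proof -
    have "rmm n V (rmm n (rmm n (rtr D) D) (rtr V)) i j = rmm n V (rmm n (rmm n (rtr V) (rmm n G V)) (rtr V)) i j"
      unfolding rmm_def[of n _ "rtr V"] rmm_def[of n V] using s1 by simp
    also have "\<dots> = rmm n V (rmm n (rtr V) (rmm n G (rmm n V (rtr V)))) i j" by (simp only: rmm_assoc)
    also have "\<dots> = rmm n G (rmm n V (rtr V)) i j" by (rule rmm_UUt[OF oV i])
    also have "\<dots> = rmm n G rId i j"
      unfolding rmm_def[of n G] using oV j unfolding rorth_def by simp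
    also have "\<dots> = G i j" by (rule rmm_Id_right[OF j])
    finally show ?thesis by simp
  qed
  have s3: "rmm n (rtr D) D a b = (if a = b then (c a)^2 else 0)" if a: "a < n" and b: "b < n" for a b
  proof -
    have "rmm n (rtr D) D a b = (\<Sum>k<n. (if k = a then c k else 0) * (if k = b then c k else 0))"
      unfolding rmm_def[of n "rtr D" D] unfolding rtr_def using d a b unfolding D_def[symmetric] by (intro sum.cong refl) simp
    also have "\<dots> = (\<Sum>k<n. if k = a then (if a = b then (c a)^2 else 0) else 0)"
      by (intro sum.cong refl) (auto simp: power2_eq_square)
    also have "\<dots> = (if a = b then (c a)^2 else 0)" using a by simp
    finally show ?thesis .
  qed
  define DD where "DD = rmm n (rtr D) D"
  have "G i j = rmm n V (rmm n DD (rtr V)) i j" using s2 unfolding DD_def .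
  also have "\<dots> = (\<Sum>a<n. V i a * (\<Sum>b<n. DD a b * V j b))"
    unfolding rmm_def[of n V] rmm_def[of n DD] rtr_def ..
  also have "\<dots> = (\<Sum>a<n. V i a * (\<Sum>b<n. (if a = b then (c a)^2 else 0) * V j b))"
    using s3 unfolding DD_def[symmetric] by simp
  also have "\<dots> = (\<Sum>a<n. V i a * (c a)^2 * V j a)"
  proof (rule sum.cong[OF refl])
    fix a assume a: "a \<in> {..<n}"
    have "(\<Sum>b<n. (if a = b then (c a)^2 else 0) * V j b) = (\<Sum>b<n. if b = a then (c a)^2 * V j a else 0)"
      by (intro sum.cong refl) auto
    also have "\<dots> = (c a)^2 * V j a" using a by simp
    finally show "V i a * (\<Sum>b<n. (if a = b then (c a)^2 else 0) * V j b) = V i a * (c a)^2 * V j a" by simp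
  qed
  finally show ?thesis unfolding G_def .
qed

lemma sum_split:
  fixes f :: "nat \<Rightarrow> 'a::comm_monoid_add"
  shows "(\<Sum>x<m*m. f x) = (\<Sum>a<m. \<Sum>b<m. f (a*m+b))"
proof -
  have "(\<Sum>x<m*m. f x) = (\<Sum>a<m. sum f {a*m..<a*m+m})"
    using sum.nat_group[of f m m] by simp
  also have "\<dots> = (\<Sum>a<m. \<Sum>b<m. f (a*m+b))"
    by (rule sum.cong[OF refl]) (simp add: sum.atLeastLessThan_shift_0 atLeast0LessThan)
  finally show ?thesis .
qed

lemma sum_swap3:
  "(\<Sum>a\<in>A. \<Sum>b\<in>B. \<Sum>k\<in>C. f a b k) = (\<Sum>k\<in>C. \<Sum>a\<in>A. \<Sum>b\<in>B. f a b k)"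
proof -
  have "(\<Sum>a\<in>A. \<Sum>b\<in>B. \<Sum>k\<in>C. f a b k) = (\<Sum>a\<in>A. \<Sum>k\<in>C. \<Sum>b\<in>B. f a b k)"
    by (rule sum.cong[OF refl], rule sum.swap)
  also have "\<dots> = (\<Sum>k\<in>C. \<Sum>a\<in>A. \<Sum>b\<in>B. f a b k)" by (rule sum.swap)
  finally show ?thesis .
qed

lemma adj_index:
  assumes X: "X \<in> carrier_mat m m" and a: "a < m" and b: "b < m"
  shows "mat_adjoint X $$ (a,b) = cnj (X $$ (b,a))"
  using X a b unfolding mat_adjoint_def by (simp add: mat_of_rows_index)

lemma adj_carrier:
  assumes X: "X \<in> carrier_mat m m"
  shows "mat_adjoint X \<in> carrier_mat m m"
  using X unfolding mat_adjoint_def mat_of_rows_def by simp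

definition ip :: "nat \<Rightarrow> complex mat \<Rightarrow> complex mat \<Rightarrow> complex" where
  "ip m X Y = mtrace (mat_adjoint X * Y) / of_nat m"

lemma ip_eq:
  assumes X: "X \<in> carrier_mat m m" and Y: "Y \<in> carrier_mat m m"
  shows "ip m X Y = (\<Sum>a<m. \<Sum>b<m. cnj (X $$ (a,b)) * Y $$ (a,b)) / of_nat m"
proof -
  have "mtrace (mat_adjoint X * Y) = (\<Sum>i<m. \<Sum>k<m. cnj (X $$ (k,i)) * Y $$ (k,i))"
    unfolding mtrace_def using X Y adj_carrier[OF X]
    by (intro sum.cong) (auto simp: scalar_prod_def atLeast0LessThan adj_index[OF X])
  also have "\<dots> = (\<Sum>k<m. \<Sum>i<m. cnj (X $$ (k,i)) * Y $$ (k,i))" by (rule sum.swap)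
  finally show ?thesis unfolding ip_def by simp
qed

lemma herm_index:
  assumes "hermitian X" "X \<in> carrier_mat m m" "a < m" "b < m"
  shows "cnj (X $$ (b,a)) = X $$ (a,b)"
proof -
  have "mat_adjoint X = X" using assms(1) unfolding hermitian_def by simp
  hence "mat_adjoint X $$ (a,b) = X $$ (a,b)" by simp
  thus ?thesis using adj_index[OF assms(2-4)] by simp
qed

lemma hermI:
  assumes X: "X \<in> carrier_mat m m" and h: "\<forall>a<m. \<forall>b<m. cnj (X $$ (b,a)) = X $$ (a,b)"
  shows "hermitian X"
proof -
  have "mat_adjoint X = X"
    by (rule eq_matI) (use X h adj_carrier[OF X] in \<open>auto simp: adj_index[OF X]\<close>)
  thus ?thesis unfolding hermitian_def using X by simp
qed

definition GG :: "nat \<Rightarrow> complex mat \<Rightarrow> complex mat \<Rightarrow> complex mat \<Rightarrow> complex" where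
  "GG m \<psi> X Y = (\<Sum>x<m*m. \<Sum>y<m*m. X $$ (x div m, y div m) * Y $$ (x mod m, y mod m) * \<psi> $$ (y,x))"

lemma div_lt: "x < m*m \<Longrightarrow> x div m < (m::nat)"
  by (simp add: less_mult_imp_div_less)
lemma mod_lt: "x < m*m \<Longrightarrow> x mod m < (m::nat)"
  by (cases "m = 0") auto

lemma trace_kron:
  assumes X: "X \<in> carrier_mat m m" and Y: "Y \<in> carrier_mat m m" and \<psi>: "\<psi> \<in> carrier_mat (m*m) (m*m)"
  shows "mtrace (kron X Y * \<psi>) = GG m \<psi> X Y"
proof -
  have k: "kron X Y \<in> carrier_mat (m*m) (m*m)" using X Y unfolding kron_def by simp
  show ?thesis
    unfolding mtrace_def GG_def using k \<psi> X Y
    by (intro sum.cong) (auto simp: scalar_prod_def atLeast0LessThan kron_def div_lt mod_lt)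
qed

definition lc :: "nat \<Rightarrow> (nat \<Rightarrow> complex) \<Rightarrow> (nat \<Rightarrow> complex mat) \<Rightarrow> complex mat" where
  "lc m \<alpha> A = mat m m (\<lambda>(a,b). \<Sum>k<m^2. \<alpha> k * A k $$ (a,b))"

lemma lc_carrier[simp]: "lc m \<alpha> A \<in> carrier_mat m m"
  unfolding lc_def by simp

lemma lc_index[simp]: "a < m \<Longrightarrow> b < m \<Longrightarrow> lc m \<alpha> A $$ (a,b) = (\<Sum>k<m^2. \<alpha> k * A k $$ (a,b))"
  unfolding lc_def by simp

lemma GG_lc_left: "GG m \<psi> (lc m \<alpha> A) Y = (\<Sum>k<m^2. \<alpha> k * GG m \<psi> (A k) Y)"
proof -
  have "GG m \<psi> (lc m \<alpha> A) Y = (\<Sum>x<m*m. \<Sum>y<m*m. \<Sum>k<m^2. \<alpha> k * (A k $$ (x div m, y div m) * Y $$ (x mod m, y mod m) * \<psi> $$ (y,x)))"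
    unfolding GG_def
    by (intro sum.cong refl) (simp add: div_lt sum_distrib_right mult.assoc)
  also have "\<dots> = (\<Sum>k<m^2. \<Sum>x<m*m. \<Sum>y<m*m. \<alpha> k * (A k $$ (x div m, y div m) * Y $$ (x mod m, y mod m) * \<psi> $$ (y,x)))"
    by (rule sum_swap3)
  also have "\<dots> = (\<Sum>k<m^2. \<alpha> k * GG m \<psi> (A k) Y)"
    unfolding GG_def by (simp add: sum_distrib_left)
  finally show ?thesis .
qed

lemma GG_lc_right: "GG m \<psi> X (lc m \<beta> B) = (\<Sum>l<m^2. \<beta> l * GG m \<psi> X (B l))"
proof -
  have "GG m \<psi> X (lc m \<beta> B) = (\<Sum>x<m*m. \<Sum>y<m*m. \<Sum>l<m^2. \<beta> l * (X $$ (x div m, y div m) * B l $$ (x mod m, y mod m) * \<psi> $$ (y,x)))"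
    unfolding GG_def
    by (intro sum.cong refl) (simp add: mod_lt sum_distrib_right sum_distrib_left mult.assoc mult.left_commute)
  also have "\<dots> = (\<Sum>l<m^2. \<Sum>x<m*m. \<Sum>y<m*m. \<beta> l * (X $$ (x div m, y div m) * B l $$ (x mod m, y mod m) * \<psi> $$ (y,x)))"
    by (rule sum_swap3)
  also have "\<dots> = (\<Sum>l<m^2. \<beta> l * GG m \<psi> X (B l))"
    unfolding GG_def by (simp add: sum_distrib_left)
  finally show ?thesis .
qed

lemma ip_lc_right:
  assumes X: "X \<in> carrier_mat m m" and B: "\<forall>l<m^2. B l \<in> carrier_mat m m"
  shows "ip m X (lc m \<beta> B) = (\<Sum>l<m^2. \<beta> l * ip m X (B l))"
proof -
  have "(\<Sum>a<m. \<Sum>b<m. cnj (X $$ (a,b)) * lc m \<beta> B $$ (a,b)) =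
        (\<Sum>a<m. \<Sum>b<m. \<Sum>l<m^2. \<beta> l * (cnj (X $$ (a,b)) * B l $$ (a,b)))"
    by (intro sum.cong refl) (simp add: sum_distrib_left mult.left_commute)
  also have "\<dots> = (\<Sum>l<m^2. \<Sum>a<m. \<Sum>b<m. \<beta> l * (cnj (X $$ (a,b)) * B l $$ (a,b)))"
    by (rule sum_swap3)
  also have "\<dots> = (\<Sum>l<m^2. \<beta> l * (\<Sum>a<m. \<Sum>b<m. cnj (X $$ (a,b)) * B l $$ (a,b)))"
    by (simp add: sum_distrib_left)
  finally have e: "(\<Sum>a<m. \<Sum>b<m. cnj (X $$ (a,b)) * lc m \<beta> B $$ (a,b)) =
     (\<Sum>l<m^2. \<beta> l * (\<Sum>a<m. \<Sum>b<m. cnj (X $$ (a,b)) * B l $$ (a,b)))" .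
  have "ip m X (lc m \<beta> B) = (\<Sum>l<m^2. \<beta> l * (\<Sum>a<m. \<Sum>b<m. cnj (X $$ (a,b)) * B l $$ (a,b))) / of_nat m"
    using ip_eq[OF X lc_carrier] e by simp
  also have "\<dots> = (\<Sum>l<m^2. \<beta> l * ip m X (B l))"
    unfolding sum_divide_distrib using B by (intro sum.cong refl) (simp add: ip_eq[OF X])
  finally show ?thesis .
qed

lemma ip_lc_left:
  assumes Y: "Y \<in> carrier_mat m m" and A: "\<forall>k<m^2. A k \<in> carrier_mat m m"
  shows "ip m (lc m \<alpha> A) Y = (\<Sum>k<m^2. cnj (\<alpha> k) * ip m (A k) Y)"
proof -
  have "(\<Sum>a<m. \<Sum>b<m. cnj (lc m \<alpha> A $$ (a,b)) * Y $$ (a,b)) =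
        (\<Sum>a<m. \<Sum>b<m. \<Sum>k<m^2. cnj (\<alpha> k) * (cnj (A k $$ (a,b)) * Y $$ (a,b)))"
    by (intro sum.cong refl) (simp add: sum_distrib_right mult.assoc)
  also have "\<dots> = (\<Sum>k<m^2. \<Sum>a<m. \<Sum>b<m. cnj (\<alpha> k) * (cnj (A k $$ (a,b)) * Y $$ (a,b)))"
    by (rule sum_swap3)
  also have "\<dots> = (\<Sum>k<m^2. cnj (\<alpha> k) * (\<Sum>a<m. \<Sum>b<m. cnj (A k $$ (a,b)) * Y $$ (a,b)))"
    by (simp add: sum_distrib_left)
  finally have e: "(\<Sum>a<m. \<Sum>b<m. cnj (lc m \<alpha> A $$ (a,b)) * Y $$ (a,b)) =
     (\<Sum>k<m^2. cnj (\<alpha> k) * (\<Sum>a<m. \<Sum>b<m. cnj (A k $$ (a,b)) * Y $$ (a,b)))" .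
  have "ip m (lc m \<alpha> A) Y = (\<Sum>k<m^2. cnj (\<alpha> k) * (\<Sum>a<m. \<Sum>b<m. cnj (A k $$ (a,b)) * Y $$ (a,b))) / of_nat m"
    using ip_eq[OF lc_carrier Y] e by simp
  also have "\<dots> = (\<Sum>k<m^2. cnj (\<alpha> k) * ip m (A k) Y)"
    unfolding sum_divide_distrib using A by (intro sum.cong refl) (simp add: ip_eq[OF _ Y])
  finally show ?thesis .
qed

definition honb :: "nat \<Rightarrow> (nat \<Rightarrow> complex mat) \<Rightarrow> bool" where
  "honb m A \<longleftrightarrow> (\<forall>i<m^2. A i \<in> carrier_mat m m \<and> hermitian (A i)) \<and>
     (\<forall>i<m^2. \<forall>j<m^2. ip m (A i) (A j) = (if i = j then 1 else 0)) \<and>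
     (\<forall>X \<in> carrier_mat m m. \<exists>c :: nat \<Rightarrow> complex. (\<forall>a<m. \<forall>b<m. X $$ (a,b) = (\<Sum>i<m^2. c i * A i $$ (a,b))))"

lemma std_onb_honb: "std_onb m A \<longleftrightarrow> honb m A \<and> A 0 = 1\<^sub>m m"
  unfolding std_onb_def honb_def ip_def by blast

definition tf :: "nat \<Rightarrow> (nat \<Rightarrow> nat \<Rightarrow> real) \<Rightarrow> (nat \<Rightarrow> complex mat) \<Rightarrow> nat \<Rightarrow> complex mat" where
  "tf m Wm A = (\<lambda>i. lc m (\<lambda>k. complex_of_real (Wm k i)) A)"

lemma delta_sum_c: fixes k n :: nat shows "k < n \<Longrightarrow> (\<Sum>l<n. f l * (if k = l then 1 else 0)) = (f k :: complex)"
proof -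
  assume k: "k < n"
  have "(\<Sum>l<n. f l * (if k = l then 1 else 0)) = (\<Sum>l<n. if l = k then f k else 0)"
    by (rule sum.cong) auto
  also have "\<dots> = f k" using k by (simp add: sum.delta)
  finally show ?thesis .
qed

lemma honb_tf:
  assumes A: "honb m A" and Wm: "rorth (m^2) Wm"
  shows "honb m (tf m Wm A)"
proof -
  let ?N = "m^2"
  have Ac: "\<forall>k<?N. A k \<in> carrier_mat m m" and Ah: "\<forall>k<?N. hermitian (A k)"
    and Ao: "\<forall>i<?N. \<forall>j<?N. ip m (A i) (A j) = (if i = j then 1 else 0)"
    and As: "\<forall>X \<in> carrier_mat m m. \<exists>c :: nat \<Rightarrow> complex. (\<forall>a<m. \<forall>b<m. X $$ (a,b) = (\<Sum>i<?N. c i * A i $$ (a,b)))"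
    using A unfolding honb_def by auto
  have herm: "hermitian (tf m Wm A i)" for i
  proof (rule hermI[of _ m])
    show "tf m Wm A i \<in> carrier_mat m m" unfolding tf_def by simp
    show "\<forall>a<m. \<forall>b<m. cnj (tf m Wm A i $$ (b, a)) = tf m Wm A i $$ (a, b)"
    proof (intro allI impI)
      fix a b assume a: "a < m" and b: "b < m"
      have "cnj (tf m Wm A i $$ (b, a)) = (\<Sum>k<?N. complex_of_real (Wm k i) * cnj (A k $$ (b,a)))"
        unfolding tf_def using a b by simp
      also have "\<dots> = (\<Sum>k<?N. complex_of_real (Wm k i) * A k $$ (a,b))"
      proof (rule sum.cong[OF refl])
        fix k assume k: "k \<in> {..<?N}"
        have "cnj (A k $$ (b,a)) = A k $$ (a,b)" using herm_index[of "A k" m a b] Ac Ah k a b by simp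
        thus "complex_of_real (Wm k i) * cnj (A k $$ (b,a)) = complex_of_real (Wm k i) * A k $$ (a,b)" by simp
      qed
      also have "\<dots> = tf m Wm A i $$ (a, b)" unfolding tf_def using a b by simp
      finally show "cnj (tf m Wm A i $$ (b, a)) = tf m Wm A i $$ (a, b)" .
    qed
  qed
  have orth: "ip m (tf m Wm A i) (tf m Wm A j) = (if i = j then 1 else 0)" if i: "i < ?N" and j: "j < ?N" for i j
  proof -
    have "ip m (tf m Wm A i) (tf m Wm A j) = (\<Sum>k<?N. complex_of_real (Wm k i) * ip m (A k) (tf m Wm A j))"
      unfolding tf_def[of m Wm A] by (simp add: ip_lc_left[OF _ Ac])
    also have "\<dots> = (\<Sum>k<?N. complex_of_real (Wm k i) * complex_of_real (Wm k j))"
    proof (rule sum.cong[OF refl])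
      fix k assume k: "k \<in> {..<?N}"
      have "ip m (A k) (tf m Wm A j) = (\<Sum>l<?N. complex_of_real (Wm l j) * ip m (A k) (A l))"
        unfolding tf_def using Ac k by (simp add: ip_lc_right)
      also have "\<dots> = complex_of_real (Wm k j)"
        using Ao k by (simp add: delta_sum_c)
      finally show "complex_of_real (Wm k i) * ip m (A k) (tf m Wm A j) = complex_of_real (Wm k i) * complex_of_real (Wm k j)"
        by simp
    qed
    also have "\<dots> = complex_of_real (rmm ?N (rtr Wm) Wm i j)"
      unfolding rmm_def rtr_def by simp
    also have "\<dots> = (if i = j then 1 else 0)" using Wm i j unfolding rorth_def rId_def by simp
    finally show ?thesis .
  qed
  have span: "\<exists>d :: nat \<Rightarrow> complex. (\<forall>a<m. \<forall>b<m. X $$ (a,b) = (\<Sum>i<?N. d i * tf m Wm A i $$ (a,b)))"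
    if X: "X \<in> carrier_mat m m" for X
  proof -
    obtain c :: "nat \<Rightarrow> complex" where c: "\<forall>a<m. \<forall>b<m. X $$ (a,b) = (\<Sum>i<?N. c i * A i $$ (a,b))"
      using As X by blast
    define d where "d = (\<lambda>i. \<Sum>k<?N. c k * complex_of_real (Wm k i))"
    have "X $$ (a,b) = (\<Sum>i<?N. d i * tf m Wm A i $$ (a,b))" if a: "a < m" and b: "b < m" for a b
    proof -
      have "(\<Sum>i<?N. d i * tf m Wm A i $$ (a,b)) =
            (\<Sum>i<?N. \<Sum>k<?N. \<Sum>l<?N. c k * (complex_of_real (Wm k i * Wm l i) * A l $$ (a,b)))"
        unfolding d_def tf_def using a b
        by (simp add: sum_product mult.assoc mult.left_commute)
      also have "\<dots> = (\<Sum>l<?N. \<Sum>i<?N. \<Sum>k<?N. c k * (complex_of_real (Wm k i * Wm l i) * A l $$ (a,b)))"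
        by (rule sum_swap3)
      also have "\<dots> = (\<Sum>k<?N. \<Sum>l<?N. \<Sum>i<?N. c k * (complex_of_real (Wm k i * Wm l i) * A l $$ (a,b)))"
        by (rule sum_swap3)
      also have "\<dots> = (\<Sum>k<?N. c k * (\<Sum>l<?N. complex_of_real (rmm ?N Wm (rtr Wm) k l) * A l $$ (a,b)))"
        unfolding rmm_def rtr_def
        by (simp add: sum_distrib_left sum_distrib_right mult.assoc)
      also have "\<dots> = (\<Sum>k<?N. c k * A k $$ (a,b))"
      proof (rule sum.cong[OF refl])
        fix k assume k: "k \<in> {..<?N}"
        have "(\<Sum>l<?N. complex_of_real (rmm ?N Wm (rtr Wm) k l) * A l $$ (a,b)) =
              (\<Sum>l<?N. if l = k then A k $$ (a,b) else 0)"
          using Wm k unfolding rorth_def rId_def by (intro sum.cong refl) auto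
        also have "\<dots> = A k $$ (a,b)" using k by simp
        finally show "c k * (\<Sum>l<?N. complex_of_real (rmm ?N Wm (rtr Wm) k l) * A l $$ (a,b)) = c k * A k $$ (a,b)"
          by simp
      qed
      also have "\<dots> = X $$ (a,b)" using c a b by simp
      finally show ?thesis by simp
    qed
    thus ?thesis by blast
  qed
  show ?thesis unfolding honb_def
    using herm orth span by (simp add: tf_def)
qed

lemma sum_swap3':
  "(\<Sum>a\<in>A. \<Sum>b\<in>B. \<Sum>k\<in>C. f a b k) = (\<Sum>b\<in>B. \<Sum>k\<in>C. \<Sum>a\<in>A. f a b k)"
proof -
  have "(\<Sum>a\<in>A. \<Sum>b\<in>B. \<Sum>k\<in>C. f a b k) = (\<Sum>k\<in>C. \<Sum>a\<in>A. \<Sum>b\<in>B. f a b k)"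
    by (rule sum_swap3)
  also have "\<dots> = (\<Sum>b\<in>B. \<Sum>k\<in>C. \<Sum>a\<in>A. f a b k)" by (rule sum_swap3)
  finally show ?thesis .
qed

lemma divmod_simps:
  assumes "b < (m::nat)" shows "(a*m+b) div m = a" "(a*m+b) mod m = b"
  using assms by auto

lemma GG_split:
  assumes m: "0 < m"
  shows "GG m \<psi> X Y = (\<Sum>a<m. \<Sum>b<m. \<Sum>c<m. \<Sum>d<m. X $$ (a,c) * Y $$ (b,d) * \<psi> $$ (c*m+d, a*m+b))"
  unfolding GG_def sum_split
  by (intro sum.cong refl) (simp add: divmod_simps)

context
  fixes m :: nat and \<psi> :: "complex mat"
  assumes m: "0 < m" and \<psi>c: "\<psi> \<in> carrier_mat (m*m) (m*m)" and \<psi>h: "hermitian \<psi>"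
    and pA: "ptrace_A m \<psi> = (1 / of_nat m) \<cdot>\<^sub>m 1\<^sub>m m"
    and pB: "ptrace_B m \<psi> = (1 / of_nat m) \<cdot>\<^sub>m 1\<^sub>m m"
begin

lemma pA_index: "d < m \<Longrightarrow> b < m \<Longrightarrow> (\<Sum>a<m. \<psi> $$ (a*m+d, a*m+b)) = (if d = b then 1 / of_nat m else 0)"
proof -
  assume d: "d < m" and b: "b < m"
  have "ptrace_A m \<psi> $$ (d,b) = ((1 / of_nat m) \<cdot>\<^sub>m 1\<^sub>m m) $$ (d,b)" using pA by simp
  thus ?thesis using d b unfolding ptrace_A_def by simp
qed

lemma pB_index: "c < m \<Longrightarrow> a < m \<Longrightarrow> (\<Sum>b<m. \<psi> $$ (c*m+b, a*m+b)) = (if c = a then 1 / of_nat m else 0)"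
proof -
  assume c: "c < m" and a: "a < m"
  have "ptrace_B m \<psi> $$ (c,a) = ((1 / of_nat m) \<cdot>\<^sub>m 1\<^sub>m m) $$ (c,a)" using pB by simp
  thus ?thesis using c a unfolding ptrace_B_def by simp
qed

lemma GG_one_left:
  assumes Y: "Y \<in> carrier_mat m m"
  shows "GG m \<psi> (1\<^sub>m m) Y = (\<Sum>b<m. Y $$ (b,b)) / of_nat m"
proof -
  have "GG m \<psi> (1\<^sub>m m) Y = (\<Sum>a<m. \<Sum>b<m. \<Sum>d<m. Y $$ (b,d) * \<psi> $$ (a*m+d, a*m+b))"
    unfolding GG_split[OF m]
  proof (rule sum.cong[OF refl], rule sum.cong[OF refl])
    fix a b assume a: "a \<in> {..<m}" and b: "b \<in> {..<m}"
    have "(\<Sum>c<m. \<Sum>d<m. 1\<^sub>m m $$ (a, c) * Y $$ (b, d) * \<psi> $$ (c * m + d, a * m + b)) =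
          (\<Sum>c<m. if c = a then (\<Sum>d<m. Y $$ (b, d) * \<psi> $$ (a * m + d, a * m + b)) else 0)"
      using a by (intro sum.cong refl) auto
    also have "\<dots> = (\<Sum>d<m. Y $$ (b, d) * \<psi> $$ (a * m + d, a * m + b))" using a by (simp add: sum.delta)
    finally show "(\<Sum>c<m. \<Sum>d<m. 1\<^sub>m m $$ (a, c) * Y $$ (b, d) * \<psi> $$ (c * m + d, a * m + b)) =
          (\<Sum>d<m. Y $$ (b, d) * \<psi> $$ (a * m + d, a * m + b))" .
  qed
  also have "\<dots> = (\<Sum>b<m. \<Sum>d<m. \<Sum>a<m. Y $$ (b,d) * \<psi> $$ (a*m+d, a*m+b))"
    by (rule sum_swap3')
  also have "\<dots> = (\<Sum>b<m. \<Sum>d<m. Y $$ (b,d) * (if d = b then 1 / of_nat m else 0))"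
    by (intro sum.cong refl) (simp add: sum_distrib_left[symmetric] pA_index)
  also have "\<dots> = (\<Sum>b<m. Y $$ (b,b) / of_nat m)"
  proof (rule sum.cong[OF refl])
    fix b assume b: "b \<in> {..<m}"
    have "(\<Sum>d<m. Y $$ (b,d) * (if d = b then 1 / of_nat m else 0)) = (\<Sum>d<m. if d = b then Y $$ (b,b) / of_nat m else 0)"
      by (intro sum.cong refl) auto
    also have "\<dots> = Y $$ (b,b) / of_nat m" using b by (simp add: sum.delta)
    finally show "(\<Sum>d<m. Y $$ (b,d) * (if d = b then 1 / of_nat m else 0)) = Y $$ (b,b) / of_nat m" .
  qed
  finally show ?thesis by (simp add: sum_divide_distrib)
qed

lemma GG_one_right:
  assumes X: "X \<in> carrier_mat m m"
  shows "GG m \<psi> X (1\<^sub>m m) = (\<Sum>a<m. X $$ (a,a)) / of_nat m"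
proof -
  have "GG m \<psi> X (1\<^sub>m m) = (\<Sum>a<m. \<Sum>b<m. \<Sum>c<m. X $$ (a,c) * \<psi> $$ (c*m+b, a*m+b))"
    unfolding GG_split[OF m]
  proof (intro sum.cong refl)
    fix a b c assume a: "a \<in> {..<m}" and b: "b \<in> {..<m}" and c: "c \<in> {..<m}"
    have "(\<Sum>d<m. X $$ (a, c) * 1\<^sub>m m $$ (b, d) * \<psi> $$ (c * m + d, a * m + b)) =
          (\<Sum>d<m. if d = b then X $$ (a, c) * \<psi> $$ (c * m + b, a * m + b) else 0)"
      using b by (intro sum.cong refl) auto
    also have "\<dots> = X $$ (a, c) * \<psi> $$ (c * m + b, a * m + b)" using b by (simp add: sum.delta)
    finally show "(\<Sum>d<m. X $$ (a, c) * 1\<^sub>m m $$ (b, d) * \<psi> $$ (c * m + d, a * m + b)) =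
          X $$ (a, c) * \<psi> $$ (c * m + b, a * m + b)" .
  qed
  also have "\<dots> = (\<Sum>a<m. \<Sum>c<m. \<Sum>b<m. X $$ (a,c) * \<psi> $$ (c*m+b, a*m+b))"
    by (rule sum.cong[OF refl], rule sum.swap)
  also have "\<dots> = (\<Sum>a<m. \<Sum>c<m. X $$ (a,c) * (if c = a then 1 / of_nat m else 0))"
    by (intro sum.cong refl) (simp add: sum_distrib_left[symmetric] pB_index)
  also have "\<dots> = (\<Sum>a<m. X $$ (a,a) / of_nat m)"
  proof (rule sum.cong[OF refl])
    fix a assume a: "a \<in> {..<m}"
    have "(\<Sum>c<m. X $$ (a,c) * (if c = a then 1 / of_nat m else 0)) = (\<Sum>c<m. if c = a then X $$ (a,a) / of_nat m else 0)"
      by (intro sum.cong refl) auto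
    also have "\<dots> = X $$ (a,a) / of_nat m" using a by (simp add: sum.delta)
    finally show "(\<Sum>c<m. X $$ (a,c) * (if c = a then 1 / of_nat m else 0)) = X $$ (a,a) / of_nat m" .
  qed
  finally show ?thesis by (simp add: sum_divide_distrib)
qed

lemma GG_real:
  assumes X: "X \<in> carrier_mat m m" "hermitian X" and Y: "Y \<in> carrier_mat m m" "hermitian Y"
  shows "cnj (GG m \<psi> X Y) = GG m \<psi> X Y"
proof -
  have "cnj (GG m \<psi> X Y) = (\<Sum>x<m*m. \<Sum>y<m*m. X $$ (y div m, x div m) * Y $$ (y mod m, x mod m) * \<psi> $$ (x,y))"
    unfolding GG_def
  proof (simp only: cnj_sum, intro sum.cong refl)
    fix x y assume x: "x \<in> {..<m*m}" and y: "y \<in> {..<m*m}"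
    have "cnj (X $$ (x div m, y div m)) = X $$ (y div m, x div m)"
      using herm_index[OF X(2) X(1)] x y div_lt by simp
    moreover have "cnj (Y $$ (x mod m, y mod m)) = Y $$ (y mod m, x mod m)"
      using herm_index[OF Y(2) Y(1)] x y mod_lt by simp
    moreover have "cnj (\<psi> $$ (y,x)) = \<psi> $$ (x,y)"
      using herm_index[OF \<psi>h \<psi>c] x y by simp
    ultimately show "cnj (X $$ (x div m, y div m) * Y $$ (x mod m, y mod m) * \<psi> $$ (y, x)) =
       X $$ (y div m, x div m) * Y $$ (y mod m, x mod m) * \<psi> $$ (x, y)" by simp
  qed
  also have "\<dots> = GG m \<psi> X Y" unfolding GG_def by (rule sum.swap)
  finally show ?thesis .
qed

end

lemma adj_one: "mat_adjoint (1\<^sub>m m) = (1\<^sub>m m :: complex mat)"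
proof -
  have c: "(1\<^sub>m m :: complex mat) \<in> carrier_mat m m" by simp
  show ?thesis using adj_carrier[OF c] by (intro eq_matI) (auto simp: adj_index[OF c])
qed

lemma ip_one:
  assumes Y: "Y \<in> carrier_mat m m"
  shows "ip m (1\<^sub>m m) Y = mtrace Y / of_nat m"
  unfolding ip_def adj_one using Y by simp

lemma mtrace_eq: "Y \<in> carrier_mat m m \<Longrightarrow> mtrace Y = (\<Sum>a<m. Y $$ (a,a))"
  unfolding mtrace_def by simp

lemma real_of_cnj: "cnj z = z \<Longrightarrow> z = complex_of_real (Re z)"
  by (simp add: complex_eq_iff)

lemma tf_zero:
  assumes A: "\<forall>k<m^2. A k \<in> carrier_mat m m" and W: "\<forall>k<m^2. Wm k 0 = rId k 0" and m: "0 < m"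
  shows "tf m Wm A 0 = A 0"
proof (rule eq_matI)
  have A0: "A 0 \<in> carrier_mat m m" using A m by simp
  show "dim_row (tf m Wm A 0) = dim_row (A 0)" "dim_col (tf m Wm A 0) = dim_col (A 0)"
    using A0 unfolding tf_def lc_def by auto
  fix a b assume a: "a < dim_row (A 0)" and b: "b < dim_col (A 0)"
  hence a': "a < m" and b': "b < m" using A0 by auto
  have "tf m Wm A 0 $$ (a,b) = (\<Sum>k<m^2. complex_of_real (rId k 0) * A k $$ (a,b))"
    unfolding tf_def using a' b' W by simp
  also have "\<dots> = (\<Sum>k<m^2. if k = 0 then A 0 $$ (a,b) else 0)"
    by (rule sum.cong) (auto simp: rId_def)
  also have "\<dots> = A 0 $$ (a,b)" using m by simp
  finally show "tf m Wm A 0 $$ (a,b) = A 0 $$ (a,b)" .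
qed

lemma std_onb_tf:
  assumes A: "std_onb m A" and W: "rorth (m^2) Wm" "\<forall>k<m^2. Wm k 0 = rId k 0" and m: "0 < m"
  shows "std_onb m (tf m Wm A)"
proof -
  have h: "honb m A" and A0: "A 0 = 1\<^sub>m m" using A unfolding std_onb_honb by auto
  have Ac: "\<forall>k<m^2. A k \<in> carrier_mat m m" using h unfolding honb_def by auto
  show ?thesis unfolding std_onb_honb
    using honb_tf[OF h W(1)] tf_zero[of m A Wm, OF Ac W(2) m] A0 by simp
qed

lemma corr_tf:
  assumes \<psi>c: "\<psi> \<in> carrier_mat (m*m) (m*m)"
    and Ac: "\<forall>k<m^2. A k \<in> carrier_mat m m" and Bc: "\<forall>k<m^2. B k \<in> carrier_mat m m"
    and i: "i < m^2" and j: "j < m^2"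
  shows "corr_mat m \<psi> (tf m Wu A) (tf m Wv B) $$ (i,j) =
     (\<Sum>k<m^2. \<Sum>l<m^2. complex_of_real (Wu k i * Wv l j) * GG m \<psi> (A k) (B l))"
proof -
  have "corr_mat m \<psi> (tf m Wu A) (tf m Wv B) $$ (i,j) = mtrace (kron (tf m Wu A i) (tf m Wv B j) * \<psi>)"
    unfolding corr_mat_def using i j by simp
  also have "\<dots> = GG m \<psi> (tf m Wu A i) (tf m Wv B j)"
    by (rule trace_kron[OF _ _ \<psi>c]) (auto simp: tf_def)
  also have "\<dots> = (\<Sum>k<m^2. complex_of_real (Wu k i) * (\<Sum>l<m^2. complex_of_real (Wv l j) * GG m \<psi> (A k) (B l)))"
    unfolding tf_def GG_lc_left by (simp only: GG_lc_right)
  also have "\<dots> = (\<Sum>k<m^2. \<Sum>l<m^2. complex_of_real (Wu k i * Wv l j) * GG m \<psi> (A k) (B l))"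
    by (simp add: sum_distrib_left mult.assoc)
  finally show ?thesis .
qed

lemma main_diag:
  assumes m: "0 < m" and \<psi>c: "\<psi> \<in> carrier_mat (m*m) (m*m)" and \<psi>h: "hermitian \<psi>"
    and pA: "ptrace_A m \<psi> = (1 / of_nat m) \<cdot>\<^sub>m 1\<^sub>m m"
    and pB: "ptrace_B m \<psi> = (1 / of_nat m) \<cdot>\<^sub>m 1\<^sub>m m"
    and A: "std_onb m A" and B: "std_onb m B"
  shows "\<exists>Wu Wv c. rorth (m^2) Wu \<and> rorth (m^2) Wv \<and> (\<forall>k<m^2. Wu k 0 = rId k 0) \<and> (\<forall>k<m^2. Wv k 0 = rId k 0)
     \<and> (\<forall>i. c i \<ge> 0) \<and> c 0 = 1 \<and> (\<forall>i j. 1 \<le> i \<and> i \<le> j \<and> j < m^2 \<longrightarrow> c j \<le> c i)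
     \<and> (\<forall>i<m^2. \<forall>j<m^2. rmm (m^2) (rmm (m^2) (rtr Wu) (\<lambda>k l. Re (GG m \<psi> (A k) (B l)))) Wv i j = (if i = j then c i else 0))"
proof -
  define N where "N = m^2"
  define n where "n = N - 1"
  have Nn: "N = Suc n" unfolding n_def N_def using m by simp
  have hA: "honb m A" and A0: "A 0 = 1\<^sub>m m" using A unfolding std_onb_honb by auto
  have hB: "honb m B" and B0: "B 0 = 1\<^sub>m m" using B unfolding std_onb_honb by auto
  have Ac: "\<forall>k<N. A k \<in> carrier_mat m m" and Ao: "\<forall>i<N. \<forall>j<N. ip m (A i) (A j) = (if i = j then 1 else 0)"
    using hA unfolding honb_def N_def by auto
  have Bc: "\<forall>k<N. B k \<in> carrier_mat m m" and Bo: "\<forall>i<N. \<forall>j<N. ip m (B i) (B j) = (if i = j then 1 else 0)"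
    using hB unfolding honb_def N_def by auto
  have N0: "0 < N" unfolding Nn by simp
  define Kf where "Kf = (\<lambda>k l. Re (GG m \<psi> (A k) (B l)))"
  have row0: "Kf 0 l = rId 0 l" if l: "l < N" for l
  proof -
    have "GG m \<psi> (A 0) (B l) = mtrace (B l) / of_nat m"
      unfolding A0 using GG_one_left[OF m \<psi>c \<psi>h pA pB, of "B l"] Bc l mtrace_eq[of "B l" m] by simp
    also have "\<dots> = ip m (B 0) (B l)" unfolding B0 using ip_one Bc l by simp
    also have "\<dots> = (if 0 = l then 1 else 0)" using Bo l N0 by simp
    finally show ?thesis unfolding Kf_def rId_def by simp
  qed
  have col0: "Kf k 0 = rId k 0" if k: "k < N" for k
  proof -
    have "GG m \<psi> (A k) (B 0) = mtrace (A k) / of_nat m"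
      unfolding B0 using GG_one_right[OF m \<psi>c \<psi>h pA pB, of "A k"] Ac k mtrace_eq[of "A k" m] by simp
    also have "\<dots> = ip m (A 0) (A k)" unfolding A0 using ip_one Ac k by simp
    also have "\<dots> = (if 0 = k then 1 else 0)" using Ao k N0 by simp
    finally show ?thesis unfolding Kf_def rId_def by auto
  qed
  define K1 where "K1 = (\<lambda>i j. Kf (Suc i) (Suc j))"
  have blk: "\<forall>a<N. \<forall>b<N. Kf a b = rblk 1 K1 a b"
  proof (intro allI impI)
    fix a b assume a: "a < N" and b: "b < N"
    show "Kf a b = rblk 1 K1 a b"
    proof (cases "a = 0")
      case True thus ?thesis using row0[OF b] by (simp add: rblk_def rId_def)
    next
      case False
      show ?thesis
      proof (cases "b = 0")
        case True thus ?thesis using col0[OF a] False by (simp add: rblk_def rId_def)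
      next
        case False2: False
        thus ?thesis using False unfolding rblk_def K1_def by (cases a; cases b) auto
      qed
    qed
  qed
  obtain U1 V1 c1 where oU1: "rorth n U1" and oV1: "rorth n V1" and c1: "\<forall>i. c1 i \<ge> 0"
    and s1: "\<forall>i j. i \<le> j \<and> j < n \<longrightarrow> c1 j \<le> c1 i"
    and d1: "\<forall>i<n. \<forall>j<n. rmm n (rmm n (rtr U1) K1) V1 i j = (if i = j then c1 i else 0)"
    using svd_sorted[of n K1] by blast
  define Wu where "Wu = rblk 1 U1"
  define Wv where "Wv = rblk 1 V1"
  define c where "c = (\<lambda>i. if i = 0 then 1 else c1 (i - 1))"
  have oWu: "rorth N Wu" unfolding Wu_def Nn by (rule rorth_rblk[OF oU1])
  have oWv: "rorth N Wv" unfolding Wv_def Nn by (rule rorth_rblk[OF oV1])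
  have Wu0: "\<forall>k<N. Wu k 0 = rId k 0" unfolding Wu_def rblk_def rId_def by simp
  have Wv0: "\<forall>k<N. Wv k 0 = rId k 0" unfolding Wv_def rblk_def rId_def by simp
  have cpos: "\<forall>i. c i \<ge> 0" using c1 unfolding c_def by simp
  have csort: "\<forall>i j. 1 \<le> i \<and> i \<le> j \<and> j < N \<longrightarrow> c j \<le> c i"
  proof (intro allI impI)
    fix i j assume ij: "1 \<le> i \<and> i \<le> j \<and> j < N"
    hence "i - 1 \<le> j - 1 \<and> j - 1 < n" using Nn by auto
    hence "c1 (j - 1) \<le> c1 (i - 1)" using s1 by blast
    thus "c j \<le> c i" using ij unfolding c_def by simp
  qed
  have diag: "rmm N (rmm N (rtr Wu) Kf) Wv i j = (if i = j then c i else 0)" if i: "i < N" and j: "j < N" for i j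
  proof -
    have "rmm N (rmm N (rtr Wu) Kf) Wv i j = rmm N (rtr Wu) (rmm N Kf Wv) i j" by (simp only: rmm_assoc)
    also have "\<dots> = rmm N (rtr Wu) (rmm N (rblk 1 K1) Wv) i j" by (rule rmm_cong_mid[OF blk])
    also have "\<dots> = rblk 1 (rmm n (rmm n (rtr U1) K1) V1) i j"
      unfolding Wu_def Wv_def rtr_rblk Nn rmm_rblk by (simp add: rmm_assoc)
    also have "\<dots> = (if i = j then c i else 0)"
      using d1 i j unfolding rblk_def c_def Nn by (cases i; cases j) auto
    finally show ?thesis .
  qed
  show ?thesis
    by (rule exI[of _ Wu], rule exI[of _ Wv], rule exI[of _ c])
       (use oWu oWv Wu0 Wv0 cpos csort diag in \<open>simp add: N_def Kf_def c_def\<close>)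
qed

lemma corr_tf_rmm:
  assumes m: "0 < m" and \<psi>c: "\<psi> \<in> carrier_mat (m*m) (m*m)" and \<psi>h: "hermitian \<psi>"
    and pA: "ptrace_A m \<psi> = (1 / of_nat m) \<cdot>\<^sub>m 1\<^sub>m m"
    and pB: "ptrace_B m \<psi> = (1 / of_nat m) \<cdot>\<^sub>m 1\<^sub>m m"
    and A: "honb m A" and B: "honb m B" and i: "i < m^2" and j: "j < m^2"
  shows "corr_mat m \<psi> (tf m Wu A) (tf m Wv B) $$ (i,j) =
     complex_of_real (rmm (m^2) (rmm (m^2) (rtr Wu) (\<lambda>k l. Re (GG m \<psi> (A k) (B l)))) Wv i j)"
proof -
  let ?N = "m^2"
  have Ac: "\<forall>k<?N. A k \<in> carrier_mat m m \<and> hermitian (A k)" using A unfolding honb_def by auto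
  have Bc: "\<forall>k<?N. B k \<in> carrier_mat m m \<and> hermitian (B k)" using B unfolding honb_def by auto
  have re: "GG m \<psi> (A k) (B l) = complex_of_real (Re (GG m \<psi> (A k) (B l)))" if "k < ?N" "l < ?N" for k l
    using GG_real[OF m \<psi>c \<psi>h pA pB, of "A k" "B l"] Ac Bc that by (intro real_of_cnj) auto
  have "corr_mat m \<psi> (tf m Wu A) (tf m Wv B) $$ (i,j) =
     (\<Sum>k<?N. \<Sum>l<?N. complex_of_real (Wu k i * Wv l j) * GG m \<psi> (A k) (B l))"
    using corr_tf[OF \<psi>c _ _ i j] Ac Bc by simp
  also have "\<dots> = (\<Sum>k<?N. \<Sum>l<?N. complex_of_real (Wu k i * Wv l j * Re (GG m \<psi> (A k) (B l))))"
    using re by (intro sum.cong refl) simp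
  also have "\<dots> = complex_of_real (\<Sum>k<?N. \<Sum>l<?N. Wu k i * Wv l j * Re (GG m \<psi> (A k) (B l)))"
    by simp
  also have "(\<Sum>k<?N. \<Sum>l<?N. Wu k i * Wv l j * Re (GG m \<psi> (A k) (B l))) =
      (\<Sum>l<?N. \<Sum>k<?N. Wu k i * Wv l j * Re (GG m \<psi> (A k) (B l)))" by (rule sum.swap)
  also have "\<dots> = rmm ?N (rmm ?N (rtr Wu) (\<lambda>k l. Re (GG m \<psi> (A k) (B l)))) Wv i j"
    unfolding rmm_def rtr_def sum_distrib_right by (simp add: ac_simps)
  finally show ?thesis .
qed

lemma lc_dim[simp]: "dim_row (lc m \<alpha> A) = m" "dim_col (lc m \<alpha> A) = m"
  unfolding lc_def by simp_all

lemma cnj_mult_self: "cnj z * z = complex_of_real ((cmod z)^2)"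
  by (metis complex_norm_square mult.commute)

lemma coeff_lc:
  assumes A: "honb m A" and P: "P \<in> carrier_mat m m"
  obtains p where "P = lc m p A" "\<forall>k<m^2. ip m (A k) P = p k"
proof -
  have Ac: "\<forall>k<m^2. A k \<in> carrier_mat m m" and Ao: "\<forall>i<m^2. \<forall>j<m^2. ip m (A i) (A j) = (if i = j then 1 else 0)"
    and As: "\<forall>X \<in> carrier_mat m m. \<exists>c :: nat \<Rightarrow> complex. (\<forall>a<m. \<forall>b<m. X $$ (a,b) = (\<Sum>i<m^2. c i * A i $$ (a,b)))"
    using A unfolding honb_def by auto
  obtain p where p: "\<forall>a<m. \<forall>b<m. P $$ (a,b) = (\<Sum>i<m^2. p i * A i $$ (a,b))" using As P by blast
  have Pe: "P = lc m p A" by (rule eq_matI) (use P p in auto)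
  have "ip m (A k) P = p k" if k: "k < m^2" for k
  proof -
    have "ip m (A k) P = (\<Sum>l<m^2. p l * ip m (A k) (A l))"
      unfolding Pe using ip_lc_right Ac k by simp
    also have "\<dots> = (\<Sum>l<m^2. p l * (if k = l then 1 else 0))" using Ao k by (intro sum.cong refl) simp
    also have "\<dots> = p k" using k by (rule delta_sum_c)
    finally show ?thesis .
  qed
  thus ?thesis using that Pe by blast
qed

lemma adj_lc:
  assumes A: "honb m A"
  shows "mat_adjoint (lc m p A) = lc m (\<lambda>k. cnj (p k)) A"
proof -
  have Ac: "\<forall>k<m^2. A k \<in> carrier_mat m m \<and> hermitian (A k)" using A unfolding honb_def by auto
  have c: "lc m p A \<in> carrier_mat m m" by simp
  show ?thesis
  proof (rule eq_matI)
    fix a b assume a: "a < dim_row (lc m (\<lambda>k. cnj (p k)) A)" and b: "b < dim_col (lc m (\<lambda>k. cnj (p k)) A)"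
    hence a': "a < m" and b': "b < m" by auto
    have "mat_adjoint (lc m p A) $$ (a,b) = cnj (lc m p A $$ (b,a))" using adj_index[OF c a' b'] .
    also have "\<dots> = (\<Sum>k<m^2. cnj (p k) * cnj (A k $$ (b,a)))" using a' b' by simp
    also have "\<dots> = (\<Sum>k<m^2. cnj (p k) * A k $$ (a,b))"
    proof (rule sum.cong[OF refl])
      fix k assume k: "k \<in> {..<m^2}"
      have "cnj (A k $$ (b,a)) = A k $$ (a,b)" using herm_index[of "A k" m a b] Ac k a' b' by simp
      thus "cnj (p k) * cnj (A k $$ (b,a)) = cnj (p k) * A k $$ (a,b)" by simp
    qed
    also have "\<dots> = lc m (\<lambda>k. cnj (p k)) A $$ (a,b)" using a' b' by simp
    finally show "mat_adjoint (lc m p A) $$ (a,b) = lc m (\<lambda>k. cnj (p k)) A $$ (a,b)" .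
  qed (use adj_carrier[OF c] in auto)
qed

lemma max_corr_diag:
  assumes m: "2 \<le> m" and \<psi>c: "\<psi> \<in> carrier_mat (m*m) (m*m)"
    and A: "std_onb m A" and B: "std_onb m B"
    and diag: "\<forall>i<m^2. \<forall>j<m^2. corr_mat m \<psi> A B $$ (i,j) = (if i = j then complex_of_real (c i) else 0)"
    and cpos: "\<forall>i. c i \<ge> 0" and cle: "\<forall>i. 1 \<le> i \<and> i < m^2 \<longrightarrow> c i \<le> c 1"
  shows "max_corr m \<psi> = c 1"
proof -
  let ?N = "m^2"
  have m0: "0 < m" using m by simp
  have N1: "1 < ?N"
  proof -
    have "2 * 2 \<le> m * m" using mult_le_mono[OF m m] .
    thus ?thesis by (simp add: power2_eq_square)
  qed
  have hA: "honb m A" and A0: "A 0 = 1\<^sub>m m" using A unfolding std_onb_honb by auto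
  have hB: "honb m B" and B0: "B 0 = 1\<^sub>m m" using B unfolding std_onb_honb by auto
  have Ac: "\<forall>k<?N. A k \<in> carrier_mat m m \<and> hermitian (A k)" and Ao: "\<forall>i<?N. \<forall>j<?N. ip m (A i) (A j) = (if i = j then 1 else 0)"
    using hA unfolding honb_def by auto
  have Bc: "\<forall>k<?N. B k \<in> carrier_mat m m \<and> hermitian (B k)" and Bo: "\<forall>i<?N. \<forall>j<?N. ip m (B i) (B j) = (if i = j then 1 else 0)"
    using hB unfolding honb_def by auto
  have GGd: "GG m \<psi> (A k) (B l) = (if k = l then complex_of_real (c k) else 0)" if "k < ?N" "l < ?N" for k l
  proof -
    have "GG m \<psi> (A k) (B l) = corr_mat m \<psi> A B $$ (k,l)"
      unfolding corr_mat_def using that trace_kron[OF _ _ \<psi>c, of "A k" "B l"] Ac Bc by simp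
    thus ?thesis using diag that by simp
  qed
  define S where "S = {cmod (mtrace (kron (mat_adjoint P) Q * \<psi>)) | P Q.
      P \<in> carrier_mat m m \<and> Q \<in> carrier_mat m m \<and> mtrace P = 0 \<and> mtrace Q = 0 \<and>
      mtrace (mat_adjoint P * P) / of_nat m = 1 \<and> mtrace (mat_adjoint Q * Q) / of_nat m = 1}"
  have tr0: "mtrace X = 0" if "X \<in> carrier_mat m m" "ip m (1\<^sub>m m) X = 0" for X
    using ip_one[OF that(1)] that(2) m0 by simp
  have mem: "c 1 \<in> S"
  proof -
    have A1: "A 1 \<in> carrier_mat m m" "hermitian (A 1)" using Ac N1 by auto
    have B1: "B 1 \<in> carrier_mat m m" "hermitian (B 1)" using Bc N1 by auto
    have f1: "mtrace (A 1) = 0" using tr0[OF A1(1)] Ao N1 A0 by force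
    have f2: "mtrace (B 1) = 0" using tr0[OF B1(1)] Bo N1 B0 by force
    have f3: "mtrace (mat_adjoint (A 1) * A 1) / of_nat m = 1" using Ao N1 unfolding ip_def by simp
    have f4: "mtrace (mat_adjoint (B 1) * B 1) / of_nat m = 1" using Bo N1 unfolding ip_def by simp
    have f5: "cmod (mtrace (kron (mat_adjoint (A 1)) (B 1) * \<psi>)) = c 1"
    proof -
      have "mat_adjoint (A 1) = A 1" using A1(2) unfolding hermitian_def by simp
      hence "mtrace (kron (mat_adjoint (A 1)) (B 1) * \<psi>) = GG m \<psi> (A 1) (B 1)"
        using trace_kron[OF A1(1) B1(1) \<psi>c] by simp
      also have "\<dots> = complex_of_real (c 1)" using GGd N1 by simp
      finally show ?thesis using cpos by simp
    qed
    show ?thesis unfolding S_def mem_Collect_eq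
      by (rule exI[of _ "A 1"], rule exI[of _ "B 1"]) (use f1 f2 f3 f4 f5 A1 B1 in simp)
  qed
  have bound: "x \<le> c 1" if x: "x \<in> S" for x
  proof -
    obtain P Q where x: "x = cmod (mtrace (kron (mat_adjoint P) Q * \<psi>))"
      and P: "P \<in> carrier_mat m m" and Q: "Q \<in> carrier_mat m m" and trP: "mtrace P = 0" and trQ: "mtrace Q = 0"
      and nP: "mtrace (mat_adjoint P * P) / of_nat m = 1" and nQ: "mtrace (mat_adjoint Q * Q) / of_nat m = 1"
      using x unfolding S_def by blast
    obtain p where Pe: "P = lc m p A" and pc: "\<forall>k<?N. ip m (A k) P = p k" using coeff_lc[OF hA P] by blast
    obtain q where Qe: "Q = lc m q B" and qc: "\<forall>k<?N. ip m (B k) Q = q k" using coeff_lc[OF hB Q] by blast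
    have p0: "p 0 = 0" using pc[rule_format, of 0] N1 A0 ip_one[OF P] trP m0 by simp
    have np: "(\<Sum>k<?N. (cmod (p k))^2) = 1"
    proof -
      have "1 = ip m P P" using nP unfolding ip_def by simp
      also have "\<dots> = (\<Sum>k<?N. cnj (p k) * ip m (A k) P)"
        using ip_lc_left[OF P, of A p] Ac Pe by simp
      also have "\<dots> = (\<Sum>k<?N. cnj (p k) * p k)"
        using pc by (intro sum.cong refl) simp
      also have "\<dots> = complex_of_real (\<Sum>k<?N. (cmod (p k))^2)"
        by (simp only: cnj_mult_self of_real_sum)
      finally have "complex_of_real (\<Sum>k<?N. (cmod (p k))^2) = 1" by simp
      thus ?thesis by (simp only: of_real_eq_1_iff)
    qed
    have nq: "(\<Sum>k<?N. (cmod (q k))^2) = 1"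
    proof -
      have "1 = ip m Q Q" using nQ unfolding ip_def by simp
      also have "\<dots> = (\<Sum>k<?N. cnj (q k) * ip m (B k) Q)"
        using ip_lc_left[OF Q, of B q] Bc Qe by simp
      also have "\<dots> = (\<Sum>k<?N. cnj (q k) * q k)"
        using qc by (intro sum.cong refl) simp
      also have "\<dots> = complex_of_real (\<Sum>k<?N. (cmod (q k))^2)"
        by (simp only: cnj_mult_self of_real_sum)
      finally have "complex_of_real (\<Sum>k<?N. (cmod (q k))^2) = 1" by simp
      thus ?thesis by (simp only: of_real_eq_1_iff)
    qed
    have val: "mtrace (kron (mat_adjoint P) Q * \<psi>) = (\<Sum>k<?N. cnj (p k) * q k * complex_of_real (c k))"
    proof -
      have "mtrace (kron (mat_adjoint P) Q * \<psi>) = GG m \<psi> (lc m (\<lambda>k. cnj (p k)) A) (lc m q B)"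
        unfolding Pe Qe adj_lc[OF hA] by (rule trace_kron[OF lc_carrier lc_carrier \<psi>c])
      also have "\<dots> = (\<Sum>k<?N. cnj (p k) * (\<Sum>l<?N. q l * GG m \<psi> (A k) (B l)))"
        unfolding GG_lc_left by (simp only: GG_lc_right)
      also have "\<dots> = (\<Sum>k<?N. cnj (p k) * (q k * complex_of_real (c k)))"
      proof (rule sum.cong[OF refl])
        fix k assume k: "k \<in> {..<?N}"
        have "(\<Sum>l<?N. q l * GG m \<psi> (A k) (B l)) = (\<Sum>l<?N. if l = k then q k * complex_of_real (c k) else 0)"
          using GGd k by (intro sum.cong refl) auto
        also have "\<dots> = q k * complex_of_real (c k)" using k by simp
        finally show "cnj (p k) * (\<Sum>l<?N. q l * GG m \<psi> (A k) (B l)) = cnj (p k) * (q k * complex_of_real (c k))"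
          by simp
      qed
      finally show ?thesis by (simp add: mult.assoc)
    qed
    have "x \<le> (\<Sum>k<?N. cmod (cnj (p k) * q k * complex_of_real (c k)))"
      unfolding x val by (rule norm_sum)
    also have "\<dots> \<le> (\<Sum>k<?N. c 1 * ((cmod (p k))^2 + (cmod (q k))^2) / 2)"
    proof (rule sum_mono)
      fix k assume k: "k \<in> {..<?N}"
      have e: "cmod (cnj (p k) * q k * complex_of_real (c k)) = cmod (p k) * cmod (q k) * c k"
        using cpos by (simp add: norm_mult)
      have amgm: "cmod (p k) * cmod (q k) \<le> ((cmod (p k))^2 + (cmod (q k))^2) / 2"
        using sum_squares_bound[of "cmod (p k)" "cmod (q k)"] by simp
      show "cmod (cnj (p k) * q k * complex_of_real (c k)) \<le> c 1 * ((cmod (p k))^2 + (cmod (q k))^2) / 2"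
      proof (cases "k = 0")
        case True
        thus ?thesis using p0 cpos by simp
      next
        case False
        hence ck: "c k \<le> c 1" using cle k by simp
        have "cmod (p k) * cmod (q k) * c k \<le> cmod (p k) * cmod (q k) * c 1"
          using ck by (intro mult_left_mono) auto
        also have "\<dots> \<le> ((cmod (p k))^2 + (cmod (q k))^2) / 2 * c 1"
          using amgm cpos by (intro mult_right_mono) auto
        finally show ?thesis unfolding e by (simp add: mult.commute)
      qed
    qed
    also have "\<dots> = (\<Sum>k<?N. (c 1 / 2) * (cmod (p k))^2 + (c 1 / 2) * (cmod (q k))^2)"
      by (rule sum.cong) (simp_all add: field_simps)
    also have "\<dots> = (c 1 / 2) * (\<Sum>k<?N. (cmod (p k))^2) + (c 1 / 2) * (\<Sum>k<?N. (cmod (q k))^2)"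
      by (simp only: sum.distrib sum_distrib_left)
    also have "\<dots> = c 1" using np nq by simp
    finally show ?thesis .
  qed
  have "Sup S = c 1" by (rule cSup_eq_maximum[OF mem bound])
  thus ?thesis unfolding max_corr_def S_def .
qed

lemma char_poly_part:
  assumes m: "0 < m" and \<psi>c: "\<psi> \<in> carrier_mat (m*m) (m*m)" and \<psi>h: "hermitian \<psi>"
    and pA: "ptrace_A m \<psi> = (1 / of_nat m) \<cdot>\<^sub>m 1\<^sub>m m"
    and pB: "ptrace_B m \<psi> = (1 / of_nat m) \<cdot>\<^sub>m 1\<^sub>m m"
    and A: "std_onb m A" and B: "std_onb m B"
    and oU: "rorth (m^2) Wu" and oV: "rorth (m^2) Wv"
    and d: "\<forall>i<m^2. \<forall>j<m^2. rmm (m^2) (rmm (m^2) (rtr Wu) (\<lambda>k l. Re (GG m \<psi> (A k) (B l)))) Wv i j = (if i = j then c i else 0)"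
  shows "char_poly (mat_adjoint (corr_mat m \<psi> A B) * corr_mat m \<psi> A B) =
     (\<Prod>x\<leftarrow>map c [0..<m^2]. [:- complex_of_real (x^2), 1:])"
proof -
  define N where "N = m^2"
  define Kf where "Kf = (\<lambda>k l. Re (GG m \<psi> (A k) (B l)))"
  define C where "C = corr_mat m \<psi> A B"
  have hA: "honb m A" and hB: "honb m B" using A B unfolding std_onb_honb by auto
  have Ac: "\<forall>k<N. A k \<in> carrier_mat m m \<and> hermitian (A k)" using hA unfolding honb_def N_def by auto
  have Bc: "\<forall>k<N. B k \<in> carrier_mat m m \<and> hermitian (B k)" using hB unfolding honb_def N_def by auto
  have Cc: "C \<in> carrier_mat N N" unfolding C_def corr_mat_def N_def by simp
  have Ce: "C $$ (k,l) = complex_of_real (Kf k l)" if "k < N" "l < N" for k l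
  proof -
    have "C $$ (k,l) = GG m \<psi> (A k) (B l)"
      unfolding C_def corr_mat_def using that trace_kron[OF _ _ \<psi>c, of "A k" "B l"] Ac Bc by (simp add: N_def)
    also have "\<dots> = complex_of_real (Kf k l)" unfolding Kf_def
      using GG_real[OF m \<psi>c \<psi>h pA pB, of "A k" "B l"] Ac Bc that by (intro real_of_cnj) auto
    finally show ?thesis .
  qed
  have gram: "rmm N (rtr Kf) Kf i j = (\<Sum>a<N. Wv i a * (c a)^2 * Wv j a)" if "i < N" "j < N" for i j
    using svd_gram[OF oU[folded N_def] oV[folded N_def] d[folded N_def Kf_def[symmetric]]] that
    unfolding Kf_def by simp
  define CtC where "CtC = mat_adjoint C * C"
  have CtCc: "CtC \<in> carrier_mat N N" unfolding CtC_def using adj_carrier[OF Cc] Cc by simp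
  define Pm where "Pm = mat N N (\<lambda>(i,a). complex_of_real (Wv i a))"
  define Qm where "Qm = mat N N (\<lambda>(a,j). complex_of_real (Wv j a))"
  define Dm where "Dm = mat N N (\<lambda>(a,b). if a = b then complex_of_real ((c a)^2) else 0)"
  define Em where "Em = mat N N (\<lambda>(i,b). complex_of_real (Wv i b * (c b)^2))"
  have Pc: "Pm \<in> carrier_mat N N" and Qc: "Qm \<in> carrier_mat N N" and Dc: "Dm \<in> carrier_mat N N"
    unfolding Pm_def Qm_def Dm_def by auto
  have PQ: "Pm * Qm = 1\<^sub>m N"
  proof (rule eq_matI)
    fix i j assume i: "i < dim_row (1\<^sub>m N)" and j: "j < dim_col (1\<^sub>m N)"
    have "(Pm * Qm) $$ (i,j) = complex_of_real (rmm N Wv (rtr Wv) i j)"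
      using i j unfolding Pm_def Qm_def rmm_def rtr_def by (simp add: scalar_prod_def atLeast0LessThan)
    also have "\<dots> = 1\<^sub>m N $$ (i,j)" using oV i j unfolding rorth_def N_def rId_def by simp
    finally show "(Pm * Qm) $$ (i,j) = 1\<^sub>m N $$ (i,j)" .
  qed (auto simp: Pm_def Qm_def)
  have QP: "Qm * Pm = 1\<^sub>m N"
  proof (rule eq_matI)
    fix i j assume i: "i < dim_row (1\<^sub>m N)" and j: "j < dim_col (1\<^sub>m N)"
    have "(Qm * Pm) $$ (i,j) = complex_of_real (rmm N (rtr Wv) Wv i j)"
      using i j unfolding Pm_def Qm_def rmm_def rtr_def by (simp add: scalar_prod_def atLeast0LessThan)
    also have "\<dots> = 1\<^sub>m N $$ (i,j)" using oV i j unfolding rorth_def N_def rId_def by simp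
    finally show "(Qm * Pm) $$ (i,j) = 1\<^sub>m N $$ (i,j)" .
  qed (auto simp: Pm_def Qm_def)
  have PD: "Pm * Dm = Em"
  proof (rule eq_matI)
    fix i b assume i: "i < dim_row Em" and b: "b < dim_col Em"
    hence i': "i < N" and b': "b < N" unfolding Em_def by auto
    have "(Pm * Dm) $$ (i,b) = (\<Sum>a<N. complex_of_real (Wv i a) * (if a = b then complex_of_real ((c a)^2) else 0))"
      using i' b' unfolding Pm_def Dm_def by (simp add: scalar_prod_def atLeast0LessThan)
    also have "\<dots> = (\<Sum>a<N. if a = b then complex_of_real (Wv i b * (c b)^2) else 0)"
      by (intro sum.cong refl) auto
    also have "\<dots> = Em $$ (i,b)" using i' b' unfolding Em_def by simp
    finally show "(Pm * Dm) $$ (i,b) = Em $$ (i,b)" .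
  qed (auto simp: Pm_def Dm_def Em_def)
  have sim: "CtC = Pm * Dm * Qm"
  proof (rule eq_matI)
    fix i j assume i: "i < dim_row (Pm * Dm * Qm)" and j: "j < dim_col (Pm * Dm * Qm)"
    hence i': "i < N" and j': "j < N" using Pc Qc by auto
    have "CtC $$ (i,j) = (\<Sum>k<N. cnj (C $$ (k,i)) * C $$ (k,j))"
      unfolding CtC_def using i' j' Cc adj_carrier[OF Cc]
      by (simp add: scalar_prod_def atLeast0LessThan adj_index[OF Cc])
    also have "\<dots> = complex_of_real (rmm N (rtr Kf) Kf i j)"
      unfolding rmm_def rtr_def of_real_sum using Ce i' j' by (intro sum.cong refl) simp
    also have "\<dots> = complex_of_real (\<Sum>a<N. Wv i a * (c a)^2 * Wv j a)" using gram i' j' by simp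
    also have "\<dots> = (Em * Qm) $$ (i,j)"
      using i' j' unfolding Em_def Qm_def by (simp add: scalar_prod_def atLeast0LessThan)
    also have "\<dots> = (Pm * Dm * Qm) $$ (i,j)" unfolding PD ..
    finally show "CtC $$ (i,j) = (Pm * Dm * Qm) $$ (i,j)" .
  qed (use CtCc Pc Qc in auto)
  have "similar_mat CtC Dm"
    by (rule similar_matI[of _ _ Pm Qm N]) (use CtCc Dc Pc Qc PQ QP sim in auto)
  hence "char_poly CtC = char_poly Dm" by (rule char_poly_similar)
  also have "\<dots> = (\<Prod>a\<leftarrow>diag_mat Dm. [:- a, 1:])"
    by (rule char_poly_upper_triangular[OF Dc]) (auto simp: upper_triangular_def Dm_def)
  also have "diag_mat Dm = map (\<lambda>x. complex_of_real (x^2)) (map c [0..<N])"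
    unfolding diag_mat_def Dm_def by (auto intro!: map_cong)
  finally show ?thesis unfolding CtC_def C_def N_def by (simp add: o_def)
qed

lemma sum2_support:
  fixes f :: "nat \<Rightarrow> nat \<Rightarrow> 'a::comm_monoid_add"
  assumes a: "a < m" and b: "b < m"
    and supp: "\<forall>x<m. \<forall>y<m. f x y \<noteq> 0 \<longrightarrow> (x = a \<and> y = b) \<or> (x = b \<and> y = a)"
  shows "(\<Sum>x<m. \<Sum>y<m. f x y) = f a b + (if a = b then 0 else f b a)"
proof -
  have "(\<Sum>x<m. \<Sum>y<m. f x y) = (\<Sum>(x,y)\<in>{..<m}\<times>{..<m}. f x y)"
    by (rule sum.cartesian_product)
  also have "\<dots> = (\<Sum>p\<in>{..<m}\<times>{..<m}. f (fst p) (snd p))"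
    by (rule sum.cong) auto
  also have "\<dots> = (\<Sum>p\<in>{(a,b),(b,a)}. f (fst p) (snd p))"
  proof (rule sum.mono_neutral_right)
    show "finite ({..<m}\<times>{..<m})" by simp
    show "{(a,b),(b,a)} \<subseteq> {..<m}\<times>{..<m}" using a b by simp
    show "\<forall>p\<in>{..<m}\<times>{..<m} - {(a,b),(b,a)}. f (fst p) (snd p) = 0"
    proof
      fix p assume p: "p \<in> {..<m}\<times>{..<m} - {(a,b),(b,a)}"
      obtain x y where xy: "p = (x,y)" by (cases p)
      have x: "x < m" and y: "y < m" and n: "\<not> ((x = a \<and> y = b) \<or> (x = b \<and> y = a))"
        using p unfolding xy by auto
      have "f x y = 0"
      proof (rule ccontr)
        assume "f x y \<noteq> 0"
        hence "(x = a \<and> y = b) \<or> (x = b \<and> y = a)" using supp x y by blast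
        thus False using n by blast
      qed
      thus "f (fst p) (snd p) = 0" unfolding xy by simp
    qed
  qed
  also have "\<dots> = f a b + (if a = b then 0 else f b a)"
  proof (cases "a = b")
    case True thus ?thesis by simp
  next
    case False
    hence "(a,b) \<notin> {(b,a)}" by simp
    thus ?thesis using False by (simp add: sum.insert)
  qed
  finally show ?thesis .
qed

definition gs :: "nat \<Rightarrow> complex" where "gs m = complex_of_real (sqrt (real m / 2))"
definition gr :: "nat \<Rightarrow> complex" where "gr m = complex_of_real (sqrt (real m))"

definition gent :: "nat \<Rightarrow> nat \<Rightarrow> nat \<Rightarrow> nat \<Rightarrow> nat \<Rightarrow> complex" where
  "gent m a b x y = (if a = b then (if x = a \<and> y = a then gr m else 0)
     else if a < b then (if (x = a \<and> y = b) \<or> (x = b \<and> y = a) then gs m else 0)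
     else (if x = a \<and> y = b then \<i> * gs m
           else if x = b \<and> y = a then - \<i> * gs m else 0))"

lemma gent_zero: assumes "\<not> ((x = a \<and> y = b) \<or> (x = b \<and> y = a))" shows "gent m a b x y = 0"
proof -
  have h1: "\<not> (x = a \<and> y = b)" and h2: "\<not> (x = b \<and> y = a)" using assms by blast+
  show ?thesis
  proof (cases "a = b")
    case True
    hence c: "\<not> (x = a \<and> y = a)" using h1 by simp
    have "gent m a b x y = (if x = a \<and> y = a then gr m else 0)" unfolding gent_def using True by simp
    also have "\<dots> = 0" using c by (simp only: if_not_P if_False)
    finally show ?thesis .
  next
    case False
    show ?thesis unfolding gent_def
      by (simp only: if_not_P[OF False] if_not_P[OF h1] if_not_P[OF h2] if_not_P[OF assms] if_cancel)
  qed
qed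

lemma gent_supp: "gent m a b x y \<noteq> 0 \<Longrightarrow> (x = a \<and> y = b) \<or> (x = b \<and> y = a)"
  using gent_zero by blast

lemma gent_ab: "gent m a b a b = (if a = b then gr m else if a < b then gs m else \<i> * gs m)"
  unfolding gent_def by simp

lemma gent_ba: "a \<noteq> b \<Longrightarrow> gent m a b b a = (if a < b then gs m else - \<i> * gs m)"
  unfolding gent_def by simp

lemma cnj_gs[simp]: "cnj (gs m) = gs m" unfolding gs_def by simp
lemma cnj_gr[simp]: "cnj (gr m) = gr m" unfolding gr_def by simp
lemma gs_sq: "gs m * gs m = of_nat m / 2"
proof -
  have "gs m * gs m = complex_of_real (sqrt (real m / 2) * sqrt (real m / 2))" unfolding gs_def by (simp only: of_real_mult)
  also have "\<dots> = complex_of_real (real m / 2)"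
  proof -
    have r: "sqrt (real m / 2) * sqrt (real m / 2) = real m / 2" by simp
    show ?thesis unfolding r ..
  qed
  also have "\<dots> = of_nat m / 2" by simp
  finally show ?thesis .
qed
lemma gr_sq: "gr m * gr m = of_nat m"
proof -
  have "gr m * gr m = complex_of_real (sqrt (real m) * sqrt (real m))" unfolding gr_def by (simp only: of_real_mult)
  also have "\<dots> = complex_of_real (real m)"
  proof -
    have r: "sqrt (real m) * sqrt (real m) = real m" by simp
    show ?thesis unfolding r ..
  qed
  also have "\<dots> = of_nat m" by simp
  finally show ?thesis .
qed

lemma gent_herm: "cnj (gent m a b y x) = gent m a b x y"
proof (cases "(x = a \<and> y = b) \<or> (x = b \<and> y = a)")
  case False
  hence F2: "\<not> ((y = a \<and> x = b) \<or> (y = b \<and> x = a))" by blast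
  show ?thesis using gent_zero[OF False] gent_zero[OF F2] by simp
next
  case True
  show ?thesis
  proof (cases "a = b")
    case ab: True
    hence "x = a" "y = a" using True by auto
    thus ?thesis using ab by (simp add: gent_ab)
  next
    case ab: False
    from True show ?thesis
    proof
      assume "x = a \<and> y = b"
      thus ?thesis using ab by (simp add: gent_ab gent_ba)
    next
      assume "x = b \<and> y = a"
      thus ?thesis using ab by (simp add: gent_ab gent_ba)
    qed
  qed
qed

lemma gent_ip:
  assumes a: "a < m" and b: "b < m"
  shows "(\<Sum>x<m. \<Sum>y<m. cnj (gent m a b x y) * gent m c d x y) = (if a = c \<and> b = d then of_nat m else 0)"
proof -
  have S: "(\<Sum>x<m. \<Sum>y<m. cnj (gent m a b x y) * gent m c d x y) =
     cnj (gent m a b a b) * gent m c d a b + (if a = b then 0 else cnj (gent m a b b a) * gent m c d b a)"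
  proof (rule sum2_support[OF a b], intro allI impI)
    fix x y assume "x < m" "y < m" and nz: "cnj (gent m a b x y) * gent m c d x y \<noteq> 0"
    hence "gent m a b x y \<noteq> 0" by auto
    thus "(x = a \<and> y = b) \<or> (x = b \<and> y = a)" by (rule gent_supp)
  qed
  show ?thesis
  proof (cases "a = c \<and> b = d")
    case True
    hence c: "c = a" and d: "d = b" by auto
    consider "a = b" | "a < b" | "b < a" by linarith
    thus ?thesis
    proof cases
      case 1
      have "cnj (gent m a b a b) * gent m c d a b = of_nat m" using 1 c d by (simp add: gent_ab gr_sq)
      thus ?thesis using S 1 True by simp
    next
      case 2 thus ?thesis unfolding S unfolding c d by (simp add: gent_ab gent_ba gs_sq)
    next
      case 3
      hence "a \<noteq> b" "\<not> a < b" by auto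
      thus ?thesis unfolding S unfolding c d by (simp add: gent_ab gent_ba gs_sq algebra_simps)
    qed
  next
    case False
    show ?thesis
    proof (cases "a = d \<and> b = c \<and> a \<noteq> b")
      case True
      hence c: "c = b" and d: "d = a" and ab: "a \<noteq> b" by auto
      have e1: "gent m b a a b = (if b < a then gs m else - \<i> * gs m)" using gent_ba[of b a m] ab by simp
      have e2: "gent m b a b a = (if b < a then gs m else \<i> * gs m)" using gent_ab[of m b a] ab by simp
      consider "a < b" | "b < a" using ab by linarith
      thus ?thesis
      proof cases
        case 1
        thus ?thesis unfolding S unfolding c d e1 e2 using ab by (simp add: gent_ab gent_ba algebra_simps)
      next
        case 2
        hence "\<not> a < b" by simp
        thus ?thesis unfolding S unfolding c d e1 e2 using ab 2 by (simp add: gent_ab gent_ba algebra_simps)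
      qed
    next
      case False2: False
      have n1: "\<not> ((a = c \<and> b = d) \<or> (a = d \<and> b = c))" using False False2 by auto
      have n2: "\<not> ((b = c \<and> a = d) \<or> (b = d \<and> a = c))" using False False2 by auto
      show ?thesis unfolding S if_not_P[OF False] using gent_zero[OF n1] gent_zero[OF n2] by simp
    qed
  qed
qed

definition gm :: "nat \<Rightarrow> nat \<Rightarrow> complex mat" where
  "gm m k = mat m m (\<lambda>(x,y). gent m (k div m) (k mod m) x y)"

lemma gs_nz: "0 < m \<Longrightarrow> gs m \<noteq> 0" unfolding gs_def by simp
lemma gr_nz: "0 < m \<Longrightarrow> gr m \<noteq> 0" unfolding gr_def by simp

lemma sum_sq_split: fixes f :: "nat \<Rightarrow> 'a::comm_monoid_add" shows "(\<Sum>k<m^2. f k) = (\<Sum>a<m. \<Sum>b<m. f (a*m+b))"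
  unfolding power2_eq_square by (rule sum_split)

lemma honb_gm:
  assumes m: "0 < m"
  shows "honb m (gm m)"
proof -
  have carr: "gm m k \<in> carrier_mat m m" for k unfolding gm_def by simp
  have herm: "hermitian (gm m k)" for k
    by (rule hermI[OF carr]) (auto simp: gm_def gent_herm)
  have dm: "k div m < m" "k mod m < m" if "k < m^2" for k
    using that div_lt mod_lt m by (auto simp: power2_eq_square)
  have orth: "ip m (gm m k) (gm m l) = (if k = l then 1 else 0)" if k: "k < m^2" and l: "l < m^2" for k l
  proof -
    have "ip m (gm m k) (gm m l) = (\<Sum>x<m. \<Sum>y<m. cnj (gent m (k div m) (k mod m) x y) * gent m (l div m) (l mod m) x y) / of_nat m"
      unfolding ip_eq[OF carr carr] by (simp add: gm_def)
    also have "\<dots> = (if k div m = l div m \<and> k mod m = l mod m then of_nat m else 0) / of_nat m"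
      using gent_ip[OF dm[OF k]] by simp
    also have "\<dots> = (if k = l then 1 else 0)"
    proof -
      have "(k div m = l div m \<and> k mod m = l mod m) = (k = l)"
        by (metis div_mult_mod_eq)
      thus ?thesis using m by simp
    qed
    finally show ?thesis .
  qed
  have span: "\<exists>co :: nat \<Rightarrow> complex. \<forall>x<m. \<forall>y<m. X $$ (x,y) = (\<Sum>k<m^2. co k * gm m k $$ (x,y))"
    if X: "X \<in> carrier_mat m m" for X
  proof -
    define coef where "coef = (\<lambda>a b. if a = b then X $$ (a,a) / gr m
        else if a < b then (X $$ (a,b) + X $$ (b,a)) / (2 * gs m)
        else (X $$ (a,b) - X $$ (b,a)) / (2 * \<i> * gs m))"
    define co where "co = (\<lambda>k. coef (k div m) (k mod m))"
    have "X $$ (x,y) = (\<Sum>k<m^2. co k * gm m k $$ (x,y))" if x: "x < m" and y: "y < m" for x y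
    proof -
      have "(\<Sum>k<m^2. co k * gm m k $$ (x,y)) = (\<Sum>a<m. \<Sum>b<m. coef a b * gent m a b x y)"
        unfolding sum_sq_split co_def gm_def using x y by (intro sum.cong refl) (simp add: divmod_simps)
      also have "\<dots> = coef x y * gent m x y x y + (if x = y then 0 else coef y x * gent m y x x y)"
      proof (rule sum2_support[OF x y], intro allI impI)
        fix a b assume "a < m" "b < m" "coef a b * gent m a b x y \<noteq> 0"
        hence "gent m a b x y \<noteq> 0" by auto
        hence "(x = a \<and> y = b) \<or> (x = b \<and> y = a)" by (rule gent_supp)
        thus "(a = x \<and> b = y) \<or> (a = y \<and> b = x)" by auto
      qed
      also have "\<dots> = X $$ (x,y)"
      proof -
        consider "x = y" | "x < y" | "y < x" by linarith
        thus ?thesis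
        proof cases
          case 1 thus ?thesis using gr_nz[OF m] by (simp add: gent_ab coef_def)
        next
          case 2
          hence ne: "y \<noteq> x" "\<not> y < x" "x \<noteq> y" by auto
          have e1: "gent m x y x y = gs m" using 2 by (simp add: gent_ab)
          have e2: "gent m y x x y = - \<i> * gs m" using gent_ba[OF ne(1)] ne by simp
          have c1: "coef x y = (X $$ (x,y) + X $$ (y,x)) / (2 * gs m)" unfolding coef_def using 2 by simp
          have c2: "coef y x = (X $$ (y,x) - X $$ (x,y)) / (2 * \<i> * gs m)" unfolding coef_def using ne by simp
          show ?thesis unfolding e1 e2 c1 c2 using ne gs_nz[OF m] by (simp add: field_simps)
        next
          case 3
          hence ne: "y \<noteq> x" "\<not> x < y" "x \<noteq> y" by auto
          have e1: "gent m x y x y = \<i> * gs m" using ne by (simp add: gent_ab)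
          have e2: "gent m y x x y = gs m" using gent_ba[OF ne(1)] 3 by simp
          have c1: "coef x y = (X $$ (x,y) - X $$ (y,x)) / (2 * \<i> * gs m)" unfolding coef_def using ne by simp
          have c2: "coef y x = (X $$ (y,x) + X $$ (x,y)) / (2 * gs m)" unfolding coef_def using 3 by simp
          show ?thesis unfolding e1 e2 c1 c2 using ne gs_nz[OF m] by (simp add: field_simps)
        qed
      qed
      finally show ?thesis by simp
    qed
    thus ?thesis by blast
  qed
  show ?thesis unfolding honb_def using carr herm orth span by blast
qed

lemma exists_std_onb:
  assumes m: "0 < m"
  shows "\<exists>A. std_onb m A"
proof -
  define u where "u = (\<lambda>k. if k div m = k mod m then 1 / sqrt (real m) else 0)"
  have N: "0 < m^2" using m by simp
  have un: "(\<Sum>k<m^2. (u k)^2) = 1"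
  proof -
    have "(\<Sum>k<m^2. (u k)^2) = (\<Sum>a<m. \<Sum>b<m. if b = a then 1 / real m else 0)"
      unfolding sum_sq_split u_def by (intro sum.cong refl) (auto simp: divmod_simps power_divide)
    also have "\<dots> = (\<Sum>a<m. 1 / real m)" by simp
    also have "\<dots> = 1" using m by simp
    finally show ?thesis .
  qed
  define Wm where "Wm = hh u"
  have oW: "rorth (m^2) Wm" unfolding Wm_def by (rule rorth_hh[OF N un])
  define A where "A = tf m Wm (gm m)"
  have hA: "honb m A" unfolding A_def by (rule honb_tf[OF honb_gm[OF m] oW])
  have A0: "A 0 = 1\<^sub>m m"
  proof (rule eq_matI)
    fix x y assume x: "x < dim_row (1\<^sub>m m)" and y: "y < dim_col (1\<^sub>m m)"
    hence x': "x < m" and y': "y < m" by auto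
    have "A 0 $$ (x,y) = (\<Sum>k<m^2. complex_of_real (hh u k 0) * gm m k $$ (x,y))"
      unfolding A_def tf_def Wm_def using x' y' by simp
    also have "\<dots> = (\<Sum>k<m^2. complex_of_real (u k) * gm m k $$ (x,y))"
      by (rule sum.cong[OF refl]) (simp add: hh_col0[OF N un])
    also have "\<dots> = (\<Sum>a<m. \<Sum>b<m. complex_of_real (if a = b then 1 / sqrt (real m) else 0) * gent m a b x y)"
      unfolding sum_sq_split u_def gm_def using x' y' by (intro sum.cong refl) (simp add: divmod_simps)
    also have "\<dots> = complex_of_real (if x = y then 1 / sqrt (real m) else 0) * gent m x y x y +
        (if x = y then 0 else complex_of_real (if y = x then 1 / sqrt (real m) else 0) * gent m y x x y)"
    proof (rule sum2_support[OF x' y'], intro allI impI)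
      fix a b assume "a < m" "b < m" "complex_of_real (if a = b then 1 / sqrt (real m) else 0) * gent m a b x y \<noteq> 0"
      hence "gent m a b x y \<noteq> 0" by auto
      hence "(x = a \<and> y = b) \<or> (x = b \<and> y = a)" by (rule gent_supp)
      thus "(a = x \<and> b = y) \<or> (a = y \<and> b = x)" by auto
    qed
    also have "\<dots> = 1\<^sub>m m $$ (x,y)"
    proof (cases "x = y")
      case True
      have "complex_of_real (1 / sqrt (real m)) * gr m = 1"
        unfolding gr_def using m by (simp add: of_real_mult[symmetric] del: of_real_mult)
      thus ?thesis using True x' by (simp add: gent_ab)
    next
      case False thus ?thesis using x' y' by simp
    qed
    finally show "A 0 $$ (x,y) = 1\<^sub>m m $$ (x,y)" .
  next
    show "dim_row (A 0) = dim_row (1\<^sub>m m)" "dim_col (A 0) = dim_col (1\<^sub>m m)"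
      unfolding A_def tf_def lc_def by auto
  qed
  show ?thesis using hA A0 unfolding std_onb_honb by blast
qed

lemma key:
  assumes m: "2 \<le> m" and \<psi>c: "\<psi> \<in> carrier_mat (m*m) (m*m)" and \<psi>h: "hermitian \<psi>"
    and pA: "ptrace_A m \<psi> = (1 / of_nat m) \<cdot>\<^sub>m 1\<^sub>m m"
    and pB: "ptrace_B m \<psi> = (1 / of_nat m) \<cdot>\<^sub>m 1\<^sub>m m"
    and mc: "max_corr m \<psi> < 1"
    and A: "std_onb m A" and B: "std_onb m B"
  shows "\<exists>Wu Wv c. std_onb m (tf m Wu A) \<and> std_onb m (tf m Wv B) \<and>
     (\<forall>i<m^2. \<forall>j<m^2. corr_mat m \<psi> (tf m Wu A) (tf m Wv B) $$ (i,j) = (if i = j then complex_of_real (c i) else 0)) \<and>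
     (\<forall>i. c i \<ge> 0) \<and> c 0 = 1 \<and> c 1 = max_corr m \<psi> \<and> (\<forall>i j. i \<le> j \<and> j < m^2 \<longrightarrow> c j \<le> c i) \<and>
     char_poly (mat_adjoint (corr_mat m \<psi> A B) * corr_mat m \<psi> A B) = (\<Prod>x\<leftarrow>map c [0..<m^2]. [:- complex_of_real (x^2), 1:])"
proof -
  have m0: "0 < m" using m by simp
  obtain Wu Wv c where oU: "rorth (m^2) Wu" and oV: "rorth (m^2) Wv" and U0: "\<forall>k<m^2. Wu k 0 = rId k 0"
    and V0: "\<forall>k<m^2. Wv k 0 = rId k 0" and cpos: "\<forall>i. c i \<ge> 0" and c0: "c 0 = 1"
    and cs: "\<forall>i j. 1 \<le> i \<and> i \<le> j \<and> j < m^2 \<longrightarrow> c j \<le> c i"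
    and d: "\<forall>i<m^2. \<forall>j<m^2. rmm (m^2) (rmm (m^2) (rtr Wu) (\<lambda>k l. Re (GG m \<psi> (A k) (B l)))) Wv i j = (if i = j then c i else 0)"
    using main_diag[OF m0 \<psi>c \<psi>h pA pB A B] by blast
  have A': "std_onb m (tf m Wu A)" by (rule std_onb_tf[OF A oU U0 m0])
  have B': "std_onb m (tf m Wv B)" by (rule std_onb_tf[OF B oV V0 m0])
  have hA: "honb m A" and hB: "honb m B" using A B unfolding std_onb_honb by auto
  have diag: "\<forall>i<m^2. \<forall>j<m^2. corr_mat m \<psi> (tf m Wu A) (tf m Wv B) $$ (i,j) = (if i = j then complex_of_real (c i) else 0)"
    using corr_tf_rmm[OF m0 \<psi>c \<psi>h pA pB hA hB] d by simp
  have cle: "\<forall>i. 1 \<le> i \<and> i < m^2 \<longrightarrow> c i \<le> c 1" using cs by auto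
  have c1: "c 1 = max_corr m \<psi>" using max_corr_diag[OF m \<psi>c A' B' diag cpos cle] by simp
  have sorted: "\<forall>i j. i \<le> j \<and> j < m^2 \<longrightarrow> c j \<le> c i"
  proof (intro allI impI)
    fix i j assume ij: "i \<le> j \<and> j < m^2"
    show "c j \<le> c i"
    proof (cases "i = 0")
      case True
      show ?thesis
      proof (cases "j = 0")
        case True thus ?thesis using \<open>i = 0\<close> by simp
      next
        case False
        hence "c j \<le> c 1" using cle ij by simp
        thus ?thesis using c1 mc c0 True by simp
      qed
    next
      case False thus ?thesis using cs ij by simp
    qed
  qed
  have cp: "char_poly (mat_adjoint (corr_mat m \<psi> A B) * corr_mat m \<psi> A B) = (\<Prod>x\<leftarrow>map c [0..<m^2]. [:- complex_of_real (x^2), 1:])"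
    by (rule char_poly_part[OF m0 \<psi>c \<psi>h pA pB A B oU oV d])
  show ?thesis
    by (rule exI[of _ Wu], rule exI[of _ Wv], rule exI[of _ c]) (use A' B' diag cpos c0 c1 sorted cp in simp)
qed

theorem lemma7p3:
  fixes m :: nat and \<psi> :: "complex mat"
  assumes "m \<ge> 2"
    and "noisy_max_ent m \<psi>"
  shows "(\<forall>\<A> \<B>. std_onb m \<A> \<and> std_onb m \<B> \<longrightarrow>
            (\<exists>s. singular_values (corr_mat m \<psi> \<A> \<B>) s \<and> s ! 0 = 1 \<and> s ! 1 = max_corr m \<psi>))
       \<and> (\<exists>\<A> \<B> (c :: nat \<Rightarrow> real). std_onb m \<A> \<and> std_onb m \<B> \<and>
            (\<forall>i<m^2. \<forall>j<m^2. corr_mat m \<psi> \<A> \<B> $$ (i,j) = (if i = j then complex_of_real (c i) else 0)) \<and>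
            c 0 = 1 \<and> c 1 = max_corr m \<psi> \<and>
            (\<forall>i j. i \<le> j \<and> j < m^2 \<longrightarrow> c j \<le> c i))"
proof -
  have m: "2 \<le> m" using assms(1) .
  have m0: "0 < m" using m by simp
  have \<psi>c: "\<psi> \<in> carrier_mat (m*m) (m*m)" and \<psi>h: "hermitian \<psi>"
    and pA: "ptrace_A m \<psi> = (1 / of_nat m) \<cdot>\<^sub>m 1\<^sub>m m"
    and pB: "ptrace_B m \<psi> = (1 / of_nat m) \<cdot>\<^sub>m 1\<^sub>m m"
    and mc: "max_corr m \<psi> < 1"
    using assms(2) unfolding noisy_max_ent_def bipartite_state_def psd_def by auto
  have N1: "1 < m^2"
  proof -
    have "2 * 2 \<le> m * m" using mult_le_mono[OF m m] .
    thus ?thesis by (simp add: power2_eq_square)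
  qed
  have part1: "\<exists>s. singular_values (corr_mat m \<psi> A B) s \<and> s ! 0 = 1 \<and> s ! 1 = max_corr m \<psi>"
    if A: "std_onb m A" and B: "std_onb m B" for A B
  proof -
    obtain Wu Wv c where cpos: "\<forall>i. c i \<ge> 0" and c0: "c 0 = 1" and c1: "c 1 = max_corr m \<psi>"
      and sorted: "\<forall>i j. i \<le> j \<and> j < m^2 \<longrightarrow> c j \<le> c i"
      and cp: "char_poly (mat_adjoint (corr_mat m \<psi> A B) * corr_mat m \<psi> A B) = (\<Prod>x\<leftarrow>map c [0..<m^2]. [:- complex_of_real (x^2), 1:])"
      using key[OF m \<psi>c \<psi>h pA pB mc A B] by blast
    define s where "s = map c [0..<m^2]"
    have "singular_values (corr_mat m \<psi> A B) s"
      unfolding singular_values_def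
    proof (intro conjI)
      show "length s = dim_col (corr_mat m \<psi> A B)" unfolding s_def corr_mat_def by simp
      show "sorted_wrt (\<ge>) s" unfolding s_def sorted_wrt_iff_nth_less using sorted by auto
      show "\<forall>x\<in>set s. 0 \<le> x" unfolding s_def using cpos by auto
      show "char_poly (mat_adjoint (corr_mat m \<psi> A B) * corr_mat m \<psi> A B) = (\<Prod>x\<leftarrow>s. [:- complex_of_real (x^2), 1:])"
        unfolding s_def by (rule cp)
    qed
    moreover have "s ! 0 = 1"
    proof -
      have l: "0 < length [0..<m^2]" using N1 m0 by simp
      have "[0..<m^2] ! 0 = 0" using nth_upt[of 0 0 "m^2"] l by simp
      thus ?thesis unfolding s_def nth_map[OF l] using c0 by simp
    qed
    moreover have "s ! 1 = max_corr m \<psi>" unfolding s_def using N1 c1 by simp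
    ultimately show ?thesis by (intro exI[of _ s]) simp
  qed
  have part2: "\<exists>\<A> \<B> (c :: nat \<Rightarrow> real). std_onb m \<A> \<and> std_onb m \<B> \<and>
            (\<forall>i<m^2. \<forall>j<m^2. corr_mat m \<psi> \<A> \<B> $$ (i,j) = (if i = j then complex_of_real (c i) else 0)) \<and>
            c 0 = 1 \<and> c 1 = max_corr m \<psi> \<and>
            (\<forall>i j. i \<le> j \<and> j < m^2 \<longrightarrow> c j \<le> c i)"
  proof -
    obtain A0 where A0: "std_onb m A0" using exists_std_onb[OF m0] by blast
    obtain Wu Wv c where A': "std_onb m (tf m Wu A0)" and B': "std_onb m (tf m Wv A0)"
      and diag: "\<forall>i<m^2. \<forall>j<m^2. corr_mat m \<psi> (tf m Wu A0) (tf m Wv A0) $$ (i,j) = (if i = j then complex_of_real (c i) else 0)"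
      and c0: "c 0 = 1" and c1: "c 1 = max_corr m \<psi>"
      and sorted: "\<forall>i j. i \<le> j \<and> j < m^2 \<longrightarrow> c j \<le> c i"
      using key[OF m \<psi>c \<psi>h pA pB mc A0 A0] by blast
    show ?thesis
      by (rule exI[of _ "tf m Wu A0"], rule exI[of _ "tf m Wv A0"], rule exI[of _ c])
         (use A' B' diag c0 c1 sorted in simp)
  qed
  show ?thesis
  proof (rule conjI)
    show "\<forall>\<A> \<B>. std_onb m \<A> \<and> std_onb m \<B> \<longrightarrow>
            (\<exists>s. singular_values (corr_mat m \<psi> \<A> \<B>) s \<and> s ! 0 = 1 \<and> s ! 1 = max_corr m \<psi>)"
      using part1 by simp
  qed (rule part2)
qed

end
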